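(* Let $\mathcal{P}$ be an augmented basic set-operad. For each $n\geq1$ and each coinvariant $\alpha\in\mathcal{P}(n)_{\mathfrak{S}_n}$ (an $\mathfrak{S}_n$-orbit in $\mathcal{P}(\{1,\dots,n\})$), choose a representative $r(\alpha)\in\mathcal{P}(\{1,\dots,n\})$ and let $P_\alpha$ be the interval $[\widehat{0},r(\alpha)]$ in the poset $\Pi_{\mathcal{P}}(\{1,\dots,n\})$. Then the collection $(P_\alpha)_\alpha$, indexed by all coinvariants of $\mathcal{P}$, is a good collection of posets.
   Context: A set-operad $\mathcal{P}$ is a species (functor from finite sets and bijections to sets) with unit and equivariant, associative, unital composition maps $\mathcal{P}(I)\times\prod_{i\in I}\mathcal{P}(J_i)\to\mathcal{P}(\coprod_{i\in I}J_i)$, $(x,(y_i))\mapsto x\circ(y_i)$. Augmented: $\mathcal{P}(\emptyset)=\emptyset$ and $\mathcal{P}$ of a singleton is a singleton. Basic: for each family $y\in\prod_{i\in I}\mathcal{P}(J_i)$, $x\mapsto x\circ y$ is injective on $\mathcal{P}(I)$. $\Pi_{\mathcal{P}}(I)$ is the set of families $x=(x_u)_{u\in\pi_x}$ where $\pi_x$ is a partition of $I$ and $x_u\in\mathcal{P}(u)$; for $a\in\Pi_{\mathcal{P}}(\pi_x)$ one sets $a\circ x=(a_v\circ(x_u)_{u\in v})_{v\in\pi_a}\in\Pi_{\mathcal{P}}(I)$. The order: $x\leq y$ iff $y=\theta\circ x$ for some $\theta\in\Pi_{\mathcal{P}}(\pi_x)$; $\widehat{0}$ is its minimum. Elements of $\mathcal{P}(I)$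 are identified with elements of $\Pi_{\mathcal{P}}(I)$ with one-block partition. A collection of posets $(P_\alpha)_{\alpha\in A}$ is good if (1) each $P_\alpha$ has a minimum $\widehat{0}$ and a maximum $\widehat{1}$, and (2) for every $\alpha$ and every $x\in P_\alpha$, the interval $[\widehat{0},x]$ is isomorphic to a finite product of posets of the collection, and $[x,\widehat{1}]$ is isomorphic to a finite product of posets of the collection. *)

theory Defs
  imports Main "HOL-Library.Disjoint_Sets"
begin

text \<open>Species with labels in finite subsets of nat.  P I is the set of structures on I;
  ren I s x relabels x in P I along a bijection s from I onto s ` I.\<close>

definition species :: "(nat set \<Rightarrow> 'b set) \<Rightarrow> (nat set \<Rightarrow> (nat \<Rightarrow> nat) \<Rightarrow> 'b \<Rightarrow> 'b) \<Rightarrow> bool" where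
  "species P ren \<longleftrightarrow>
     (\<forall>I J s x. finite I \<and> bij_betw s I J \<and> x \<in> P I \<longrightarrow> ren I s x \<in> P J) \<and>
     (\<forall>I s x. finite I \<and> (\<forall>i\<in>I. s i = i) \<and> x \<in> P I \<longrightarrow> ren I s x = x) \<and>
     (\<forall>I J s t x. finite I \<and> bij_betw s I J \<and> (\<forall>i\<in>I. s i = t i) \<and> x \<in> P I
        \<longrightarrow> ren I s x = ren I t x) \<and>
     (\<forall>I J K s t x. finite I \<and> bij_betw s I J \<and> bij_betw t J K \<and> x \<in> P I
        \<longrightarrow> ren J t (ren I s x) = ren I (t \<circ> s) x)"

text \<open>Admissible arguments of a composition x o (y_i)_{i in I}: the J i are pairwise
  disjoint finite sets (modelling the disjoint union) and y i is in P (J i).\<close>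

definition comp_args :: "(nat set \<Rightarrow> 'b set) \<Rightarrow> nat set \<Rightarrow> (nat \<Rightarrow> nat set) \<Rightarrow> (nat \<Rightarrow> 'b) \<Rightarrow> bool" where
  "comp_args P I J y \<longleftrightarrow> finite I \<and> (\<forall>i\<in>I. finite (J i)) \<and> disjoint_family_on J I
     \<and> (\<forall>i\<in>I. y i \<in> P (J i))"

definition set_operad ::
  "(nat set \<Rightarrow> 'b set) \<Rightarrow> (nat set \<Rightarrow> (nat \<Rightarrow> nat) \<Rightarrow> 'b \<Rightarrow> 'b) \<Rightarrow> (nat \<Rightarrow> 'b)
   \<Rightarrow> (nat set \<Rightarrow> 'b \<Rightarrow> (nat \<Rightarrow> nat set) \<Rightarrow> (nat \<Rightarrow> 'b) \<Rightarrow> 'b) \<Rightarrow> bool" where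
  "set_operad P ren e cmp \<longleftrightarrow>
     species P ren \<and>
     \<comment> \<open>unit: a natural element of P on each singleton\<close>
     (\<forall>i. e i \<in> P {i}) \<and>
     (\<forall>i s. ren {i} s (e i) = e (s i)) \<and>
     \<comment> \<open>composition lands in P of the union\<close>
     (\<forall>I x J y. x \<in> P I \<and> comp_args P I J y \<longrightarrow> cmp I x J y \<in> P (\<Union>(J ` I))) \<and>
     \<comment> \<open>composition only depends on the family indexed by I\<close>
     (\<forall>I x J y J' y'. x \<in> P I \<and> comp_args P I J y \<and> (\<forall>i\<in>I. J i = J' i \<and> y i = y' i)
        \<longrightarrow> cmp I x J y = cmp I x J' y') \<and>
     \<comment> \<open>equivariance in the top argument\<close>
     (\<forall>I K s x J y. finite I \<and> bij_betw s I K \<and> x \<in> P I \<and> comp_args P K J y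
        \<longrightarrow> cmp K (ren I s x) J y = cmp I x (J \<circ> s) (y \<circ> s)) \<and>
     \<comment> \<open>equivariance in the inputs\<close>
     (\<forall>I x J y t. x \<in> P I \<and> comp_args P I J y \<and> inj_on t (\<Union>(J ` I))
        \<longrightarrow> ren (\<Union>(J ` I)) t (cmp I x J y)
            = cmp I x (\<lambda>i. t ` J i) (\<lambda>i. ren (J i) t (y i))) \<and>
     \<comment> \<open>unit laws\<close>
     (\<forall>i J y. comp_args P {i} J y \<longrightarrow> cmp {i} (e i) J y = y i) \<and>
     (\<forall>I x. finite I \<and> x \<in> P I \<longrightarrow> cmp I x (\<lambda>i. {i}) e = x) \<and>
     \<comment> \<open>associativity\<close>
     (\<forall>I x J y K z. x \<in> P I \<and> comp_args P I J y \<and> comp_args P (\<Union>(J ` I)) K z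
        \<longrightarrow> cmp (\<Union>(J ` I)) (cmp I x J y) K z
            = cmp I x (\<lambda>i. \<Union>(K ` J i)) (\<lambda>i. cmp (J i) (y i) K z))"

definition augmented :: "(nat set \<Rightarrow> 'b set) \<Rightarrow> (nat \<Rightarrow> 'b) \<Rightarrow> bool" where
  "augmented P e \<longleftrightarrow> P {} = {} \<and> (\<forall>i. P {i} = {e i})"

definition basic :: "(nat set \<Rightarrow> 'b set) \<Rightarrow> (nat set \<Rightarrow> 'b \<Rightarrow> (nat \<Rightarrow> nat set) \<Rightarrow> (nat \<Rightarrow> 'b) \<Rightarrow> 'b) \<Rightarrow> bool" where
  "basic P cmp \<longleftrightarrow> (\<forall>I J y. comp_args P I J y \<longrightarrow> inj_on (\<lambda>x. cmp I x J y) (P I))"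

text \<open>Pi_P(I): families (x_u)_{u in pi_x}, represented as partial maps with domain pi_x.\<close>

definition PiP :: "(nat set \<Rightarrow> 'b set) \<Rightarrow> nat set \<Rightarrow> (nat set \<Rightarrow> 'b option) set" where
  "PiP P I = {x. partition_on I (dom x) \<and> (\<forall>u\<in>dom x. the (x u) \<in> P u)}"

text \<open>a o x, where the blocks of pi_x are labelled by a finite set L of naturals
  through a bijection b : L -> pi_x, and a is in Pi_P(L).\<close>

definition compfam ::
  "(nat set \<Rightarrow> 'b \<Rightarrow> (nat \<Rightarrow> nat set) \<Rightarrow> (nat \<Rightarrow> 'b) \<Rightarrow> 'b) \<Rightarrow> (nat \<Rightarrow> nat set)
   \<Rightarrow> (nat set \<Rightarrow> 'b option) \<Rightarrow> (nat set \<Rightarrow> 'b option) \<Rightarrow> (nat set \<Rightarrow> 'b option)" where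
  "compfam cmp b a x = (\<lambda>w. if \<exists>v\<in>dom a. w = \<Union>(b ` v)
      then (let v = (THE v. v \<in> dom a \<and> w = \<Union>(b ` v))
            in Some (cmp v (the (a v)) b (\<lambda>l. the (x (b l)))))
      else None)"

definition le_Pi ::
  "(nat set \<Rightarrow> 'b set) \<Rightarrow> (nat set \<Rightarrow> 'b \<Rightarrow> (nat \<Rightarrow> nat set) \<Rightarrow> (nat \<Rightarrow> 'b) \<Rightarrow> 'b) \<Rightarrow> nat set
   \<Rightarrow> (nat set \<Rightarrow> 'b option) \<Rightarrow> (nat set \<Rightarrow> 'b option) \<Rightarrow> bool" where
  "le_Pi P cmp I x y \<longleftrightarrow> x \<in> PiP P I \<and> y \<in> PiP P I \<and>
     (\<exists>L b a. finite L \<and> bij_betw b L (dom x) \<and> a \<in> PiP P L \<and> y = compfam cmp b a x)"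

definition pi_zero :: "(nat \<Rightarrow> 'b) \<Rightarrow> nat set \<Rightarrow> (nat set \<Rightarrow> 'b option)" where
  "pi_zero e I = (\<lambda>u. if \<exists>i\<in>I. u = {i} then Some (e (the_elem u)) else None)"

definition one_block :: "nat set \<Rightarrow> 'b \<Rightarrow> (nat set \<Rightarrow> 'b option)" where
  "one_block I x = [I \<mapsto> x]"

definition coinvariants :: "(nat set \<Rightarrow> 'b set) \<Rightarrow> (nat set \<Rightarrow> (nat \<Rightarrow> nat) \<Rightarrow> 'b \<Rightarrow> 'b)
   \<Rightarrow> (nat \<times> 'b set) set" where
  "coinvariants P ren = {(n, \<alpha>). n \<ge> 1 \<and>
     (\<exists>x \<in> P {1..n}. \<alpha> = {ren {1..n} s x | s. bij_betw s {1..n} {1..n}})}"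

text \<open>Posets given as carrier + relation; finite products indexed by lists.\<close>

definition is_poset :: "'x set \<Rightarrow> ('x \<Rightarrow> 'x \<Rightarrow> bool) \<Rightarrow> bool" where
  "is_poset C le \<longleftrightarrow> (\<forall>x\<in>C. le x x) \<and> (\<forall>x\<in>C. \<forall>y\<in>C. le x y \<and> le y x \<longrightarrow> x = y)
     \<and> (\<forall>x\<in>C. \<forall>y\<in>C. \<forall>z\<in>C. le x y \<and> le y z \<longrightarrow> le x z)"

definition poset_iso :: "'x set \<Rightarrow> ('x \<Rightarrow> 'x \<Rightarrow> bool) \<Rightarrow> 'y set \<Rightarrow> ('y \<Rightarrow> 'y \<Rightarrow> bool) \<Rightarrow> bool" where
  "poset_iso X leX Y leY \<longleftrightarrow>
     (\<exists>f. bij_betw f X Y \<and> (\<forall>a\<in>X. \<forall>b\<in>X. leX a b \<longleftrightarrow> leY (f a) (f b)))"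

definition prod_carrier :: "('i \<Rightarrow> 'x set) \<Rightarrow> 'i list \<Rightarrow> 'x list set" where
  "prod_carrier C is = {ts. length ts = length is \<and> (\<forall>k<length is. ts ! k \<in> C (is ! k))}"

definition prod_le :: "('i \<Rightarrow> 'x \<Rightarrow> 'x \<Rightarrow> bool) \<Rightarrow> 'i list \<Rightarrow> 'x list \<Rightarrow> 'x list \<Rightarrow> bool" where
  "prod_le le is ts us \<longleftrightarrow> (\<forall>k<length is. le (is ! k) (ts ! k) (us ! k))"

definition iso_finite_product ::
  "'i set \<Rightarrow> ('i \<Rightarrow> 'x set) \<Rightarrow> ('i \<Rightarrow> 'x \<Rightarrow> 'x \<Rightarrow> bool) \<Rightarrow> 'x set \<Rightarrow> ('x \<Rightarrow> 'x \<Rightarrow> bool) \<Rightarrow> bool" where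
  "iso_finite_product A C le X leX \<longleftrightarrow>
     (\<exists>is. set is \<subseteq> A \<and> poset_iso X leX (prod_carrier C is) (prod_le le is))"

definition good_collection :: "'i set \<Rightarrow> ('i \<Rightarrow> 'x set) \<Rightarrow> ('i \<Rightarrow> 'x \<Rightarrow> 'x \<Rightarrow> bool) \<Rightarrow> bool" where
  "good_collection A C le \<longleftrightarrow>
     (\<forall>\<alpha>\<in>A. is_poset (C \<alpha>) (le \<alpha>)) \<and>
     (\<forall>\<alpha>\<in>A. \<exists>bot\<in>C \<alpha>. \<exists>top\<in>C \<alpha>. (\<forall>y\<in>C \<alpha>. le \<alpha> bot y \<and> le \<alpha> y top) \<and>
        (\<forall>x\<in>C \<alpha>.
           iso_finite_product A C le {y\<in>C \<alpha>. le \<alpha> bot y \<and> le \<alpha> y x} (le \<alpha>) \<and>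
           iso_finite_product A C le {y\<in>C \<alpha>. le \<alpha> x y \<and> le \<alpha> y top} (le \<alpha>)))"

end

theory Submission
  imports Defs
begin


lemma part_uniq:
  assumes "partition_on A Q" "u \<in> Q" "v \<in> Q" "i \<in> u" "i \<in> v" shows "u = v"
proof -
  have "disjoint Q" using assms(1) partition_onD2 by blast
  then show ?thesis using assms(2-5) disjointD by fastforce
qed

lemma part_ne: "partition_on A Q \<Longrightarrow> u \<in> Q \<Longrightarrow> u \<noteq> {}"
  using partition_onD3 by blast

lemma part_sub: "partition_on A Q \<Longrightarrow> u \<in> Q \<Longrightarrow> u \<subseteq> A"
  using partition_onD1 by blast

lemma part_cover: "partition_on A Q \<Longrightarrow> i \<in> A \<Longrightarrow> \<exists>u\<in>Q. i \<in> u"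
  using partition_onD1 by blast

lemma part_finite: "partition_on A Q \<Longrightarrow> finite A \<Longrightarrow> finite Q"
  by (rule finite_elements)

lemma part_finite_blocks: "partition_on A Q \<Longrightarrow> finite A \<Longrightarrow> u \<in> Q \<Longrightarrow> finite u"
  using part_sub finite_subset by metis

lemma part_I:
  assumes "\<Union>Q = A" "\<And>u v. u \<in> Q \<Longrightarrow> v \<in> Q \<Longrightarrow> u \<inter> v \<noteq> {} \<Longrightarrow> u = v" "{} \<notin> Q"
  shows "partition_on A Q"
  unfolding partition_on_def disjoint_def using assms by blast

definition blocks_in :: "(nat set \<Rightarrow> 'b option) \<Rightarrow> nat set \<Rightarrow> nat set set" where
  "blocks_in x w = {u \<in> dom x. u \<subseteq> w}"

locale OP =
  fixes P :: "nat set \<Rightarrow> 'b set"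
    and ren :: "nat set \<Rightarrow> (nat \<Rightarrow> nat) \<Rightarrow> 'b \<Rightarrow> 'b"
    and e :: "nat \<Rightarrow> 'b"
    and cmp :: "nat set \<Rightarrow> 'b \<Rightarrow> (nat \<Rightarrow> nat set) \<Rightarrow> (nat \<Rightarrow> 'b) \<Rightarrow> 'b"
  assumes op: "set_operad P ren e cmp" and aug: "augmented P e" and bas: "basic P cmp"
begin

lemma ax1: "species P ren"
  using op unfolding set_operad_def by (elim conjE) assumption

lemma ax2: "\<forall>i. e i \<in> P {i}"
  using op unfolding set_operad_def by (elim conjE) assumption

lemma ax3: "\<forall>i s. ren {i} s (e i) = e (s i)"
  using op unfolding set_operad_def by (elim conjE) assumption

lemma ax4: "\<forall>I x J y. x \<in> P I \<and> comp_args P I J y \<longrightarrow> cmp I x J y \<in> P (\<Union>(J ` I))"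
  using op unfolding set_operad_def by (elim conjE) assumption

lemma ax5: "\<forall>I x J y J' y'. x \<in> P I \<and> comp_args P I J y \<and> (\<forall>i\<in>I. J i = J' i \<and> y i = y' i)
        \<longrightarrow> cmp I x J y = cmp I x J' y'"
  using op unfolding set_operad_def by (elim conjE) assumption

lemma ax6: "\<forall>I K s x J y. finite I \<and> bij_betw s I K \<and> x \<in> P I \<and> comp_args P K J y
        \<longrightarrow> cmp K (ren I s x) J y = cmp I x (J \<circ> s) (y \<circ> s)"
  using op unfolding set_operad_def by (elim conjE) assumption

lemma ax7: "\<forall>I x J y t. x \<in> P I \<and> comp_args P I J y \<and> inj_on t (\<Union>(J ` I))
        \<longrightarrow> ren (\<Union>(J ` I)) t (cmp I x J y)
            = cmp I x (\<lambda>i. t ` J i) (\<lambda>i. ren (J i) t (y i))"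
  using op unfolding set_operad_def by (elim conjE) assumption

lemma ax8: "\<forall>i J y. comp_args P {i} J y \<longrightarrow> cmp {i} (e i) J y = y i"
  using op unfolding set_operad_def by (elim conjE) assumption

lemma ax9: "\<forall>I x. finite I \<and> x \<in> P I \<longrightarrow> cmp I x (\<lambda>i. {i}) e = x"
  using op unfolding set_operad_def by (elim conjE) assumption

lemma ax10: "\<forall>I x J y K z. x \<in> P I \<and> comp_args P I J y \<and> comp_args P (\<Union>(J ` I)) K z
        \<longrightarrow> cmp (\<Union>(J ` I)) (cmp I x J y) K z
            = cmp I x (\<lambda>i. \<Union>(K ` J i)) (\<lambda>i. cmp (J i) (y i) K z)"
  using op unfolding set_operad_def by (elim conjE) assumption

lemma sp1: "\<forall>I J s x. finite I \<and> bij_betw s I J \<and> x \<in> P I \<longrightarrow> ren I s x \<in> P J"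
  using ax1 unfolding species_def by (elim conjE) assumption

lemma sp2: "\<forall>I s x. finite I \<and> (\<forall>i\<in>I. s i = i) \<and> x \<in> P I \<longrightarrow> ren I s x = x"
  using ax1 unfolding species_def by (elim conjE) assumption

lemma sp3: "\<forall>I J s t x. finite I \<and> bij_betw s I J \<and> (\<forall>i\<in>I. s i = t i) \<and> x \<in> P I
        \<longrightarrow> ren I s x = ren I t x"
  using ax1 unfolding species_def by (elim conjE) assumption

lemma sp4: "\<forall>I J K s t x. finite I \<and> bij_betw s I J \<and> bij_betw t J K \<and> x \<in> P I
        \<longrightarrow> ren J t (ren I s x) = ren I (t \<circ> s) x"
  using ax1 unfolding species_def by (elim conjE) assumption

lemma ren_in: "finite I \<Longrightarrow> bij_betw s I J \<Longrightarrow> x \<in> P I \<Longrightarrow> ren I s x \<in> P J"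
  by (rule sp1[rule_format]) auto
lemma ren_id: "finite I \<Longrightarrow> (\<And>i. i\<in>I \<Longrightarrow> s i = i) \<Longrightarrow> x \<in> P I \<Longrightarrow> ren I s x = x"
  by (rule sp2[rule_format]) auto
lemma ren_cong: "finite I \<Longrightarrow> bij_betw s I J \<Longrightarrow> (\<And>i. i\<in>I \<Longrightarrow> s i = t i) \<Longrightarrow> x \<in> P I \<Longrightarrow> ren I s x = ren I t x"
  by (rule sp3[rule_format]) auto
lemma ren_comp: "finite I \<Longrightarrow> bij_betw s I J \<Longrightarrow> bij_betw t J K \<Longrightarrow> x \<in> P I \<Longrightarrow> ren J t (ren I s x) = ren I (t \<circ> s) x"
  by (rule sp4[rule_format]) auto
lemma e_in: "e i \<in> P {i}"
  by (rule ax2[rule_format])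
lemma P_single: "P {i} = {e i}"
  using aug unfolding augmented_def by blast
lemma P_empty: "P {} = {}"
  using aug unfolding augmented_def by blast
lemma cmp_in: "x \<in> P I \<Longrightarrow> comp_args P I J y \<Longrightarrow> cmp I x J y \<in> P (\<Union>(J ` I))"
  by (rule ax4[rule_format]) auto
lemma cmp_cong: "x \<in> P I \<Longrightarrow> comp_args P I J y \<Longrightarrow> (\<And>i. i\<in>I \<Longrightarrow> J i = J' i) \<Longrightarrow> (\<And>i. i\<in>I \<Longrightarrow> y i = y' i)
   \<Longrightarrow> cmp I x J y = cmp I x J' y'"
  by (rule ax5[rule_format]) auto
lemma cmp_equiv_top: "finite I \<Longrightarrow> bij_betw s I K \<Longrightarrow> x \<in> P I \<Longrightarrow> comp_args P K J y
        \<Longrightarrow> cmp K (ren I s x) J y = cmp I x (J \<circ> s) (y \<circ> s)"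
  by (rule ax6[rule_format]) auto
lemma cmp_equiv_in: "x \<in> P I \<Longrightarrow> comp_args P I J y \<Longrightarrow> inj_on t (\<Union>(J ` I))
        \<Longrightarrow> ren (\<Union>(J ` I)) t (cmp I x J y) = cmp I x (\<lambda>i. t ` J i) (\<lambda>i. ren (J i) t (y i))"
  by (rule ax7[rule_format]) auto
lemma cmp_unit_l: "comp_args P {i} J y \<Longrightarrow> cmp {i} (e i) J y = y i"
  by (rule ax8[rule_format]) auto
lemma cmp_unit_r: "finite I \<Longrightarrow> x \<in> P I \<Longrightarrow> cmp I x (\<lambda>i. {i}) e = x"
  by (rule ax9[rule_format]) auto
lemma cmp_assoc: "x \<in> P I \<Longrightarrow> comp_args P I J y \<Longrightarrow> comp_args P (\<Union>(J ` I)) K z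
        \<Longrightarrow> cmp (\<Union>(J ` I)) (cmp I x J y) K z = cmp I x (\<lambda>i. \<Union>(K ` J i)) (\<lambda>i. cmp (J i) (y i) K z)"
  by (rule ax10[rule_format]) auto
lemma basic_inj: "comp_args P I J y \<Longrightarrow> x \<in> P I \<Longrightarrow> x' \<in> P I \<Longrightarrow> cmp I x J y = cmp I x' J y \<Longrightarrow> x = x'"
  using bas unfolding basic_def inj_on_def by blast

lemma P_nonempty_idx: "x \<in> P I \<Longrightarrow> I \<noteq> {}"
  using P_empty by auto

end


context OP begin

definition gen :: "(nat set \<Rightarrow> 'b option) \<Rightarrow> nat set \<Rightarrow> 'b \<Rightarrow> bool" where
  "gen x w p \<longleftrightarrow> (\<exists>L b q. finite L \<and> bij_betw b L (blocks_in x w) \<and> q \<in> P L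
      \<and> p = cmp L q b (\<lambda>l. the (x (b l))))"

lemma PiP_D: "x \<in> PiP P I \<Longrightarrow> partition_on I (dom x)"
  unfolding PiP_def by blast
lemma PiP_val: "x \<in> PiP P I \<Longrightarrow> u \<in> dom x \<Longrightarrow> the (x u) \<in> P u"
  unfolding PiP_def by blast

lemma ca_blocks:
  assumes x: "x \<in> PiP P I" and fI: "finite I" and b: "bij_betw b L B" and B: "B \<subseteq> dom x" and fL: "finite L"
  shows "comp_args P L b (\<lambda>l. the (x (b l)))"
  unfolding comp_args_def
proof (intro conjI ballI)
  show "finite L" by fact
  fix i assume i: "i \<in> L"
  then have bi: "b i \<in> dom x" using bij_betw_apply[OF b] B by blast
  then show "finite (b i)" by (rule part_finite_blocks[OF PiP_D[OF x] fI])
  show "the (x (b i)) \<in> P (b i)" using PiP_val[OF x bi] .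
next
  show "disjoint_family_on b L"
    unfolding disjoint_family_on_def
  proof (intro ballI impI)
    fix m n assume m: "m \<in> L" and n: "n \<in> L" and mn: "m \<noteq> n"
    have "b m \<noteq> b n" using b m n mn unfolding bij_betw_def inj_on_def by blast
    moreover have "b m \<in> dom x" "b n \<in> dom x" using bij_betw_apply[OF b] B m n by blast+
    ultimately show "b m \<inter> b n = {}" using part_uniq[OF PiP_D[OF x]] by (metis disjoint_iff)
  qed
qed

lemma gen_any_label:
  assumes x: "x \<in> PiP P I" and fI: "finite I" and g: "gen x w p"
    and fL': "finite L'" and b': "bij_betw b' L' (blocks_in x w)"
  shows "\<exists>q'\<in>P L'. p = cmp L' q' b' (\<lambda>l. the (x (b' l)))"
proof -
  obtain L b q where fL: "finite L" and b: "bij_betw b L (blocks_in x w)" and q: "q \<in> P L"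
    and p: "p = cmp L q b (\<lambda>l. the (x (b l)))"
    using g unfolding gen_def by blast
  have Bsub: "blocks_in x w \<subseteq> dom x" unfolding blocks_in_def by blast
  define s where "s = inv_into L' b' \<circ> b"
  have s: "bij_betw s L L'" unfolding s_def
    using bij_betw_trans[OF b bij_betw_inv_into[OF b']] .
  have bs: "b' (s l) = b l" if "l \<in> L" for l
  proof -
    have "b l \<in> b' ` L'" using b b' that bij_betw_apply bij_betw_imp_surj_on by metis
    then show ?thesis unfolding s_def by (simp add: f_inv_into_f)
  qed
  have ca': "comp_args P L' b' (\<lambda>l. the (x (b' l)))" using ca_blocks[OF x fI b' Bsub fL'] .
  have ca: "comp_args P L b (\<lambda>l. the (x (b l)))" using ca_blocks[OF x fI b Bsub fL] .
  have "cmp L' (ren L s q) b' (\<lambda>l. the (x (b' l))) = cmp L q (b' \<circ> s) ((\<lambda>l. the (x (b' l))) \<circ> s)"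
    using cmp_equiv_top[OF fL s q ca'] .
  also have "\<dots> = p" unfolding p
    by (rule sym, rule cmp_cong[OF q ca]) (simp_all add: bs)
  finally show ?thesis using ren_in[OF fL s q] by metis
qed

end


context OP begin

lemma lab_inj: "bij_betw b L D \<Longrightarrow> l \<in> L \<Longrightarrow> l' \<in> L \<Longrightarrow> b l = b l' \<Longrightarrow> l = l'"
  unfolding bij_betw_def inj_on_def by blast

lemma lab_sub:
  assumes x: "x \<in> PiP P I" and b: "bij_betw b L (dom x)" and l: "l \<in> L" and v: "v \<subseteq> L"
    and sub: "b l \<subseteq> \<Union>(b ` v)"
  shows "l \<in> v"
proof -
  have bl: "b l \<in> dom x" using bij_betw_apply[OF b l] .
  have "b l \<noteq> {}" using part_ne[OF PiP_D[OF x] bl] .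
  then obtain i where i: "i \<in> b l" by blast
  then obtain l' where l': "l' \<in> v" "i \<in> b l'" using sub by blast
  have bl': "b l' \<in> dom x" using bij_betw_apply[OF b] l' v by blast
  have "b l = b l'" using part_uniq[OF PiP_D[OF x] bl bl' i l'(2)] .
  then have "l = l'" using lab_inj[OF b l] l' v by blast
  then show ?thesis using l' by simp
qed

lemma blocks_in_lab:
  assumes x: "x \<in> PiP P I" and b: "bij_betw b L (dom x)" and v: "v \<subseteq> L"
  shows "blocks_in x (\<Union>(b ` v)) = b ` v"
proof
  show "blocks_in x (\<Union>(b ` v)) \<subseteq> b ` v"
  proof
    fix u assume u: "u \<in> blocks_in x (\<Union>(b ` v))"
    then have ud: "u \<in> dom x" and us: "u \<subseteq> \<Union>(b ` v)" unfolding blocks_in_def by auto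
    obtain l where l: "l \<in> L" "u = b l" using ud b unfolding bij_betw_def by blast
    have "l \<in> v" using lab_sub[OF x b l(1) v] us l(2) by blast
    then show "u \<in> b ` v" using l(2) by blast
  qed
next
  show "b ` v \<subseteq> blocks_in x (\<Union>(b ` v))"
    unfolding blocks_in_def using bij_betw_apply[OF b] v by blast
qed

lemma lab_union_inj:
  assumes x: "x \<in> PiP P I" and b: "bij_betw b L (dom x)" and a: "a \<in> PiP P L"
    and v: "v \<in> dom a" and v': "v' \<in> dom a" and eq: "\<Union>(b ` v) \<inter> \<Union>(b ` v') \<noteq> {}"
  shows "v = v'"
proof -
  have vL: "v \<subseteq> L" "v' \<subseteq> L" using part_sub[OF PiP_D[OF a]] v v' by blast+
  obtain i l l' where l: "l \<in> v" "i \<in> b l" and l': "l' \<in> v'" "i \<in> b l'" using eq by blast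
  have "b l \<in> dom x" "b l' \<in> dom x" using bij_betw_apply[OF b] l(1) l'(1) vL by blast+
  then have "b l = b l'" using part_uniq[OF PiP_D[OF x]] l(2) l'(2) by blast
  then have "l = l'" using lab_inj[OF b] l(1) l'(1) vL by blast
  then show ?thesis using part_uniq[OF PiP_D[OF a] v v'] l(1) l'(1) by blast
qed

lemma compfam_at:
  assumes x: "x \<in> PiP P I" and b: "bij_betw b L (dom x)" and a: "a \<in> PiP P L" and v: "v \<in> dom a"
  shows "compfam cmp b a x (\<Union>(b ` v)) = Some (cmp v (the (a v)) b (\<lambda>l. the (x (b l))))"
proof -
  have ne: "\<Union>(b ` v) \<noteq> {}"
  proof -
    have "v \<noteq> {}" using part_ne[OF PiP_D[OF a] v] .
    then obtain l where l: "l \<in> v" by blast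
    have "l \<in> L" using part_sub[OF PiP_D[OF a] v] l by blast
    then have "b l \<noteq> {}" using part_ne[OF PiP_D[OF x] bij_betw_apply[OF b]] by blast
    then show ?thesis using l by blast
  qed
  have the: "(THE v'. v' \<in> dom a \<and> \<Union>(b ` v) = \<Union>(b ` v')) = v"
  proof (rule the_equality)
    show "v \<in> dom a \<and> \<Union>(b ` v) = \<Union>(b ` v)" using v by simp
    fix v' assume "v' \<in> dom a \<and> \<Union>(b ` v) = \<Union>(b ` v')"
    then have "v' \<in> dom a" "\<Union>(b ` v) \<inter> \<Union>(b ` v') \<noteq> {}" using ne by auto
    then show "v' = v" using lab_union_inj[OF x b a v] by metis
  qed
  show ?thesis unfolding compfam_def using v the by (auto simp: Let_def)
qed

lemma compfam_none:
  assumes "\<not> (\<exists>v\<in>dom a. w = \<Union>(b ` v))"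
  shows "compfam cmp b a x w = None"
  using assms unfolding compfam_def by auto

lemma compfam_dom:
  assumes x: "x \<in> PiP P I" and b: "bij_betw b L (dom x)" and a: "a \<in> PiP P L"
  shows "dom (compfam cmp b a x) = (\<lambda>v. \<Union>(b ` v)) ` dom a"
proof
  show "dom (compfam cmp b a x) \<subseteq> (\<lambda>v. \<Union>(b ` v)) ` dom a"
  proof
    fix w assume w: "w \<in> dom (compfam cmp b a x)"
    show "w \<in> (\<lambda>v. \<Union>(b ` v)) ` dom a"
    proof (rule ccontr)
      assume "w \<notin> (\<lambda>v. \<Union>(b ` v)) ` dom a"
      then have "\<not> (\<exists>v\<in>dom a. w = \<Union>(b ` v))" by blast
      then have "compfam cmp b a x w = None" by (rule compfam_none)
      then show False using w by blast
    qed
  qed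
  show "(\<lambda>v. \<Union>(b ` v)) ` dom a \<subseteq> dom (compfam cmp b a x)"
  proof
    fix w assume "w \<in> (\<lambda>v. \<Union>(b ` v)) ` dom a"
    then obtain v where "v \<in> dom a" "w = \<Union>(b ` v)" by blast
    then show "w \<in> dom (compfam cmp b a x)" using compfam_at[OF x b a] by blast
  qed
qed

lemma union_lab_all:
  assumes x: "x \<in> PiP P I" and b: "bij_betw b L (dom x)"
  shows "\<Union>(b ` L) = I"
proof -
  have "b ` L = dom x" using b unfolding bij_betw_def by blast
  then show ?thesis using partition_onD1[OF PiP_D[OF x]] by simp
qed

lemma compfam_PiP:
  assumes x: "x \<in> PiP P I" and fI: "finite I" and b: "bij_betw b L (dom x)" and a: "a \<in> PiP P L"
  shows "compfam cmp b a x \<in> PiP P I"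
proof -
  have fL: "finite L"
    using bij_betw_finite[OF b] part_finite[OF PiP_D[OF x] fI] by blast
  have part: "partition_on I ((\<lambda>v. \<Union>(b ` v)) ` dom a)"
  proof (rule part_I)
    have "\<Union>((\<lambda>v. \<Union>(b ` v)) ` dom a) = \<Union>(b ` \<Union>(dom a))" by blast
    also have "\<Union>(dom a) = L" using partition_onD1[OF PiP_D[OF a]] by simp
    finally show "\<Union>((\<lambda>v. \<Union>(b ` v)) ` dom a) = I" using union_lab_all[OF x b] by simp
  next
    fix u w assume "u \<in> (\<lambda>v. \<Union>(b ` v)) ` dom a" "w \<in> (\<lambda>v. \<Union>(b ` v)) ` dom a" "u \<inter> w \<noteq> {}"
    then show "u = w" using lab_union_inj[OF x b a] by blast
  next
    show "{} \<notin> (\<lambda>v. \<Union>(b ` v)) ` dom a"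
    proof
      assume "{} \<in> (\<lambda>v. \<Union>(b ` v)) ` dom a"
      then obtain v where v: "v \<in> dom a" "\<Union>(b ` v) = {}" by blast
      have "v \<noteq> {}" using part_ne[OF PiP_D[OF a] v(1)] .
      then obtain l where l: "l \<in> v" by blast
      have "l \<in> L" using part_sub[OF PiP_D[OF a] v(1)] l by blast
      then have "b l \<noteq> {}" using part_ne[OF PiP_D[OF x] bij_betw_apply[OF b]] by blast
      then show False using l v(2) by blast
    qed
  qed
  have vals: "the (compfam cmp b a x w) \<in> P w" if w: "w \<in> dom (compfam cmp b a x)" for w
  proof -
    obtain v where v: "v \<in> dom a" and wv: "w = \<Union>(b ` v)" using w compfam_dom[OF x b a] by blast
    have vL: "v \<subseteq> L" using part_sub[OF PiP_D[OF a] v] .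
    have bv: "bij_betw b v (b ` v)" using b vL unfolding bij_betw_def by (meson inj_on_subset inj_on_imp_bij_betw)
    have sub: "b ` v \<subseteq> dom x" using bij_betw_apply[OF b] vL by blast
    have ca: "comp_args P v b (\<lambda>l. the (x (b l)))"
      using ca_blocks[OF x fI bv sub finite_subset[OF vL fL]] .
    have "cmp v (the (a v)) b (\<lambda>l. the (x (b l))) \<in> P (\<Union>(b ` v))"
      using cmp_in[OF PiP_val[OF a v] ca] .
    then show ?thesis using compfam_at[OF x b a v] wv by simp
  qed
  show ?thesis unfolding PiP_def using part vals compfam_dom[OF x b a] by simp
qed

end


context OP begin

lemma finite_lab:
  assumes x: "x \<in> PiP P I" and fI: "finite I" and b: "bij_betw b L (dom x)"
  shows "finite L"
  using bij_betw_finite[OF b] part_finite[OF PiP_D[OF x] fI] by blast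

lemma bij_sub: "bij_betw b L D \<Longrightarrow> v \<subseteq> L \<Longrightarrow> bij_betw b v (b ` v)"
  unfolding bij_betw_def by (meson inj_on_subset inj_on_imp_bij_betw)

lemma le_imp:
  assumes le: "le_Pi P cmp I x y" and fI: "finite I"
  shows "x \<in> PiP P I" "y \<in> PiP P I"
    "\<And>w. w \<in> dom y \<Longrightarrow> \<Union>(blocks_in x w) = w \<and> gen x w (the (y w))"
proof -
  show x: "x \<in> PiP P I" and "y \<in> PiP P I" using le unfolding le_Pi_def by blast+
  obtain L b a where fL: "finite L" and b: "bij_betw b L (dom x)" and a: "a \<in> PiP P L"
    and y: "y = compfam cmp b a x" using le unfolding le_Pi_def by blast
  fix w assume w: "w \<in> dom y"
  then obtain v where v: "v \<in> dom a" and wv: "w = \<Union>(b ` v)" using compfam_dom[OF x b a] y by blast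
  have vL: "v \<subseteq> L" using part_sub[OF PiP_D[OF a] v] .
  have bi: "blocks_in x w = b ` v" using blocks_in_lab[OF x b vL] wv by simp
  have "gen x w (the (y w))" unfolding gen_def
  proof (intro exI conjI)
    show "finite v" using finite_subset[OF vL fL] .
    show "bij_betw b v (blocks_in x w)" using bij_sub[OF b vL] bi by simp
    show "the (a v) \<in> P v" using PiP_val[OF a v] .
    show "the (y w) = cmp v (the (a v)) b (\<lambda>l. the (x (b l)))"
      using compfam_at[OF x b a v] y wv by simp
  qed
  then show "\<Union>(blocks_in x w) = w \<and> gen x w (the (y w))" using bi wv by simp
qed

lemma le_fixed:
  assumes x: "x \<in> PiP P I" and y: "y \<in> PiP P I" and fI: "finite I"
    and H: "\<And>w. w \<in> dom y \<Longrightarrow> \<Union>(blocks_in x w) = w \<and> gen x w (the (y w))"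
    and b: "bij_betw b L (dom x)"
  shows "\<exists>a\<in>PiP P L. y = compfam cmp b a x"
proof -
  have fL: "finite L" using finite_lab[OF x fI b] .
  define V where "V w = {l \<in> L. b l \<subseteq> w}" for w
  have bV: "b ` V w = blocks_in x w" for w
  proof
    show "b ` V w \<subseteq> blocks_in x w"
      using bij_betw_apply[OF b] unfolding V_def blocks_in_def by blast
    show "blocks_in x w \<subseteq> b ` V w"
    proof
      fix u assume "u \<in> blocks_in x w"
      then have u: "u \<in> dom x" "u \<subseteq> w" unfolding blocks_in_def by auto
      then obtain l where "l \<in> L" "u = b l" using b unfolding bij_betw_def by blast
      then show "u \<in> b ` V w" unfolding V_def using u(2) by blast
    qed
  qed
  have bijV: "bij_betw b (V w) (blocks_in x w)" for w
    using bij_sub[OF b, of "V w"] bV unfolding V_def by auto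
  have VL: "V w \<subseteq> L" for w unfolding V_def by blast
  have UV: "\<Union>(b ` V w) = w" if "w \<in> dom y" for w using bV H[OF that] by simp
  have Vne: "V w \<noteq> {}" if w: "w \<in> dom y" for w
  proof -
    have "w \<noteq> {}" using part_ne[OF PiP_D[OF y] w] .
    then show ?thesis using UV[OF w] by auto
  qed
  have Vdisj: "w = w'" if w: "w \<in> dom y" and w': "w' \<in> dom y" and i: "V w \<inter> V w' \<noteq> {}" for w w'
  proof -
    obtain l where l: "l \<in> V w" "l \<in> V w'" using i by blast
    have "b l \<in> dom x" using bij_betw_apply[OF b] l(1) VL by blast
    then have "b l \<noteq> {}" using part_ne[OF PiP_D[OF x]] by blast
    then obtain j where "j \<in> b l" by blast
    then have "j \<in> w" "j \<in> w'" using l unfolding V_def by blast+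
    then show ?thesis using part_uniq[OF PiP_D[OF y] w w'] by blast
  qed
  have Vinj: "w = w'" if "w \<in> dom y" "w' \<in> dom y" "V w = V w'" for w w'
    using Vdisj[OF that(1,2)] Vne[OF that(1)] that(3) by auto
  define Q where "Q w = (SOME q. q \<in> P (V w) \<and> the (y w) = cmp (V w) q b (\<lambda>l. the (x (b l))))" for w
  have Q: "Q w \<in> P (V w) \<and> the (y w) = cmp (V w) (Q w) b (\<lambda>l. the (x (b l)))" if w: "w \<in> dom y" for w
  proof -
    have "\<exists>q\<in>P (V w). the (y w) = cmp (V w) q b (\<lambda>l. the (x (b l)))"
      using gen_any_label[OF x fI conjunct2[OF H[OF w]] finite_subset[OF VL fL] bijV] .
    then show ?thesis unfolding Q_def by (rule someI2_bex) blast
  qed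
  define a where "a = (\<lambda>v. if \<exists>w\<in>dom y. v = V w then Some (Q (THE w. w \<in> dom y \<and> v = V w)) else None)"
  have aV: "a (V w) = Some (Q w)" if w: "w \<in> dom y" for w
  proof -
    have "(THE w'. w' \<in> dom y \<and> V w = V w') = w"
      using w Vinj by (intro the_equality) auto
    then show ?thesis unfolding a_def using w by auto
  qed
  have doma: "dom a = V ` dom y"
  proof
    show "dom a \<subseteq> V ` dom y" unfolding a_def by (auto simp: domIff split: if_splits)
    show "V ` dom y \<subseteq> dom a" using aV by blast
  qed
  have part: "partition_on L (V ` dom y)"
  proof (rule part_I)
    show "\<Union>(V ` dom y) = L"
    proof
      show "\<Union>(V ` dom y) \<subseteq> L" using VL by blast
      show "L \<subseteq> \<Union>(V ` dom y)"
      proof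
        fix l assume l: "l \<in> L"
        have bl: "b l \<in> dom x" using bij_betw_apply[OF b l] .
        then have "b l \<noteq> {}" using part_ne[OF PiP_D[OF x]] by blast
        then obtain i where i: "i \<in> b l" by blast
        have "i \<in> I" using part_sub[OF PiP_D[OF x] bl] i by blast
        then obtain w where w: "w \<in> dom y" "i \<in> w" using part_cover[OF PiP_D[OF y]] by blast
        then have "i \<in> \<Union>(blocks_in x w)" using H[OF w(1)] by simp
        then obtain u where u: "u \<in> blocks_in x w" "i \<in> u" by blast
        have "u \<in> dom x" "u \<subseteq> w" using u(1) unfolding blocks_in_def by auto
        then have "u = b l" using part_uniq[OF PiP_D[OF x] _ bl] u(2) i by blast
        then have "l \<in> V w" unfolding V_def using l \<open>u \<subseteq> w\<close> by blast
        then show "l \<in> \<Union>(V ` dom y)" using w(1) by blast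
      qed
    qed
  next
    fix u v assume "u \<in> V ` dom y" "v \<in> V ` dom y" "u \<inter> v \<noteq> {}"
    then show "u = v" using Vdisj by blast
  next
    show "{} \<notin> V ` dom y" using Vne by (metis imageE)
  qed
  have aP: "a \<in> PiP P L"
    unfolding PiP_def
  proof (intro CollectI conjI ballI)
    show "partition_on L (dom a)" using part doma by simp
    fix v assume "v \<in> dom a"
    then obtain w where w: "w \<in> dom y" "v = V w" using doma by blast
    then show "the (a v) \<in> P v" using aV Q by simp
  qed
  have "y = compfam cmp b a x"
  proof
    fix w
    show "y w = compfam cmp b a x w"
    proof (cases "w \<in> dom y")
      case True
      have Vd: "V w \<in> dom a" using doma True by blast
      have "compfam cmp b a x w = compfam cmp b a x (\<Union>(b ` V w))" using UV[OF True] by simp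
      also have "\<dots> = Some (cmp (V w) (the (a (V w))) b (\<lambda>l. the (x (b l))))"
        using compfam_at[OF x b aP Vd] .
      also have "\<dots> = Some (the (y w))" using aV[OF True] Q[OF True] by simp
      also have "\<dots> = y w" using True by (metis domIff option.collapse)
      finally show ?thesis by (rule sym)
    next
      case False
      have "\<not> (\<exists>v\<in>dom a. w = \<Union>(b ` v))"
      proof
        assume "\<exists>v\<in>dom a. w = \<Union>(b ` v)"
        then obtain v where v: "v \<in> dom a" "w = \<Union>(b ` v)" by blast
        then obtain w' where w': "w' \<in> dom y" "v = V w'" using doma by blast
        then have "w = w'" using UV[OF w'(1)] v(2) by simp
        then show False using False w'(1) by simp
      qed
      then have "compfam cmp b a x w = None" by (rule compfam_none)
      moreover have "y w = None" using False by (simp add: domIff)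
      ultimately show ?thesis by simp
    qed
  qed
  then show ?thesis using aP by blast
qed

lemma le_char:
  assumes fI: "finite I"
  shows "le_Pi P cmp I x y \<longleftrightarrow> x \<in> PiP P I \<and> y \<in> PiP P I \<and>
     (\<forall>w\<in>dom y. \<Union>(blocks_in x w) = w \<and> gen x w (the (y w)))"
proof
  assume "le_Pi P cmp I x y" then show "x \<in> PiP P I \<and> y \<in> PiP P I \<and>
     (\<forall>w\<in>dom y. \<Union>(blocks_in x w) = w \<and> gen x w (the (y w)))" using le_imp[OF _ fI] by blast
next
  assume A: "x \<in> PiP P I \<and> y \<in> PiP P I \<and>
     (\<forall>w\<in>dom y. \<Union>(blocks_in x w) = w \<and> gen x w (the (y w)))"
  have xP: "x \<in> PiP P I" and yP: "y \<in> PiP P I"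
    and H: "\<And>w. w \<in> dom y \<Longrightarrow> \<Union>(blocks_in x w) = w \<and> gen x w (the (y w))" using A by auto
  have fx: "finite (dom x)" using part_finite[OF PiP_D[OF xP] fI] .
  obtain b where b: "bij_betw b {0..<card (dom x)} (dom x)" using ex_bij_betw_nat_finite[OF fx] by (elim exE)
  have "\<exists>a\<in>PiP P {0..<card (dom x)}. y = compfam cmp b a x"
    by (rule le_fixed[OF xP yP fI _ b]) (rule H)
  then obtain a where "a \<in> PiP P {0..<card (dom x)}" "y = compfam cmp b a x" by (elim bexE)
  then show "le_Pi P cmp I x y" unfolding le_Pi_def using xP yP b by blast
qed

end


context OP begin

lemma ca_single:
  assumes x: "x \<in> PiP P I" and fI: "finite I" and w: "w \<in> dom x"
  shows "comp_args P {l} (\<lambda>_. w) (\<lambda>_. the (x w))"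
  unfolding comp_args_def disjoint_family_on_def
  using part_finite_blocks[OF PiP_D[OF x] fI w] PiP_val[OF x w] by auto

lemma blocks_in_self:
  assumes x: "x \<in> PiP P I" and w: "w \<in> dom x"
  shows "blocks_in x w = {w}"
proof
  show "blocks_in x w \<subseteq> {w}"
  proof
    fix u assume "u \<in> blocks_in x w"
    then have u: "u \<in> dom x" "u \<subseteq> w" unfolding blocks_in_def by auto
    have "u \<noteq> {}" using part_ne[OF PiP_D[OF x] u(1)] .
    then obtain i where "i \<in> u" by blast
    then have "u = w" using part_uniq[OF PiP_D[OF x] u(1) w] u(2) by blast
    then show "u \<in> {w}" by simp
  qed
  show "{w} \<subseteq> blocks_in x w" using w unfolding blocks_in_def by simp
qed

lemma gen_refl:
  assumes x: "x \<in> PiP P I" and fI: "finite I" and w: "w \<in> dom x"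
  shows "gen x w (the (x w))"
  unfolding gen_def
proof (intro exI conjI)
  show "finite {0::nat}" by simp
  show "bij_betw (\<lambda>_. w) {0::nat} (blocks_in x w)" using blocks_in_self[OF x w]
    by (simp add: bij_betw_def)
  show "e 0 \<in> P {0}" by (rule e_in)
  have "comp_args P {0} (\<lambda>_. w) (\<lambda>_. the (x w))" by (rule ca_single[OF x fI w])
  then have "cmp {0} (e 0) (\<lambda>_. w) (\<lambda>_. the (x w)) = the (x w)" by (rule cmp_unit_l)
  then show "the (x w) = cmp {0} (e 0) (\<lambda>_. w) (\<lambda>l. the (x w))" by simp
qed

lemma le_refl:
  assumes x: "x \<in> PiP P I" and fI: "finite I"
  shows "le_Pi P cmp I x x"
  unfolding le_char[OF fI]
  using x gen_refl[OF x fI] blocks_in_self[OF x] by simp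

lemma le_refines:
  assumes le: "le_Pi P cmp I x y" and fI: "finite I" and u: "u \<in> dom x"
  shows "\<exists>v\<in>dom y. u \<subseteq> v"
proof -
  have x: "x \<in> PiP P I" and y: "y \<in> PiP P I" using le_imp[OF le fI] by auto
  have "u \<noteq> {}" using part_ne[OF PiP_D[OF x] u] .
  then obtain i where i: "i \<in> u" by blast
  have "i \<in> I" using part_sub[OF PiP_D[OF x] u] i by blast
  then obtain v where v: "v \<in> dom y" "i \<in> v" using part_cover[OF PiP_D[OF y]] by blast
  then have "i \<in> \<Union>(blocks_in x v)" using le_imp(3)[OF le fI v(1)] by simp
  then obtain u' where u': "u' \<in> blocks_in x v" "i \<in> u'" by blast
  then have "u' \<in> dom x" "u' \<subseteq> v" unfolding blocks_in_def by auto
  then have "u' = u" using part_uniq[OF PiP_D[OF x] _ u] u'(2) i by blast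
  then show ?thesis using v(1) \<open>u' \<subseteq> v\<close> by blast
qed

lemma le_antisym:
  assumes le1: "le_Pi P cmp I x y" and le2: "le_Pi P cmp I y x" and fI: "finite I"
  shows "x = y"
proof -
  have x: "x \<in> PiP P I" and y: "y \<in> PiP P I" using le_imp[OF le1 fI] by auto
  have domsub: "dom b \<subseteq> dom a" if l1: "le_Pi P cmp I a b" and l2: "le_Pi P cmp I b a" for a b
  proof
    fix w assume w: "w \<in> dom b"
    have a: "a \<in> PiP P I" and b: "b \<in> PiP P I" using le_imp[OF l1 fI] by auto
    have "w \<noteq> {}" using part_ne[OF PiP_D[OF b] w] .
    then obtain i where "i \<in> \<Union>(blocks_in a w)" using le_imp(3)[OF l1 fI w] by auto
    then obtain u where u: "u \<in> blocks_in a w" "i \<in> u" by blast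
    then have ud: "u \<in> dom a" and uw: "u \<subseteq> w" unfolding blocks_in_def by auto
    obtain v where v: "v \<in> dom b" "v \<subseteq> u" using le_refines[OF l2 fI] ud
      using le_imp(3)[OF l2 fI ud] part_ne[OF PiP_D[OF a] ud]
      unfolding blocks_in_def by blast
    have "v \<noteq> {}" using part_ne[OF PiP_D[OF b] v(1)] .
    then obtain j where "j \<in> v" by blast
    then have "v = w" using part_uniq[OF PiP_D[OF b] v(1) w] v(2) uw by blast
    then have "u = w" using v(2) uw by blast
    then show "w \<in> dom a" using ud by simp
  qed
  have dxy: "dom x = dom y" using domsub[OF le1 le2] domsub[OF le2 le1] by blast
  show "x = y"
  proof
    fix w
    show "x w = y w"
    proof (cases "w \<in> dom y")
      case False then show ?thesis using dxy by (metis domIff)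
    next
      case True
      have wx: "w \<in> dom x" using True dxy by simp
      obtain L b q where fL: "finite L" and b: "bij_betw b L (blocks_in x w)" and q: "q \<in> P L"
        and p: "the (y w) = cmp L q b (\<lambda>l. the (x (b l)))"
        using le_imp(3)[OF le1 fI True] unfolding gen_def by blast
      have b': "bij_betw b L {w}" using b blocks_in_self[OF x wx] by simp
      then have "L \<noteq> {}" unfolding bij_betw_def by auto
      then obtain l where l: "l \<in> L" by blast
      have Ll: "L = {l}"
      proof
        show "L \<subseteq> {l}"
        proof
          fix m assume m: "m \<in> L"
          have "b m = b l" using bij_betw_apply[OF b' m] bij_betw_apply[OF b' l] by simp
          then show "m \<in> {l}" using lab_inj[OF b' m l] by simp
        qed
      qed (use l in simp)
      have bl: "b l = w" using bij_betw_apply[OF b' l] by simp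
      have "q = e l" using q P_single Ll by simp
      have ca: "comp_args P {l} b (\<lambda>m. the (x (b m)))"
        using ca_single[OF x fI wx, of l] bl unfolding comp_args_def disjoint_family_on_def by simp
      have "the (y w) = the (x w)" using p cmp_unit_l[OF ca] Ll \<open>q = e l\<close> bl by simp
      then show ?thesis using True wx by (metis domIff option.collapse)
    qed
  qed
qed

end


context OP begin

lemma le_trans:
  assumes l1: "le_Pi P cmp I x y" and l2: "le_Pi P cmp I y z" and fI: "finite I"
  shows "le_Pi P cmp I x z"
proof -
  have x: "x \<in> PiP P I" and y: "y \<in> PiP P I" using le_imp[OF l1 fI] by auto
  have z: "z \<in> PiP P I" using le_imp[OF l2 fI] by auto
  have H1: "\<And>v. v \<in> dom y \<Longrightarrow> \<Union>(blocks_in x v) = v \<and> gen x v (the (y v))" using le_imp(3)[OF l1 fI] .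
  have H2: "\<And>w. w \<in> dom z \<Longrightarrow> \<Union>(blocks_in y w) = w \<and> gen y w (the (z w))" using le_imp(3)[OF l2 fI] .
  have union: "\<Union>(blocks_in x w) = w" if w: "w \<in> dom z" for w
  proof
    show "\<Union>(blocks_in x w) \<subseteq> w" unfolding blocks_in_def by blast
    show "w \<subseteq> \<Union>(blocks_in x w)"
    proof
      fix i assume "i \<in> w"
      then obtain v where v: "v \<in> blocks_in y w" "i \<in> v" using H2[OF w] by blast
      then have vd: "v \<in> dom y" and vw: "v \<subseteq> w" unfolding blocks_in_def by auto
      then obtain u where u: "u \<in> blocks_in x v" "i \<in> u" using H1[OF vd] v(2) by blast
      then have "u \<in> blocks_in x w" using vw unfolding blocks_in_def by auto
      then show "i \<in> \<Union>(blocks_in x w)" using u(2) by blast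
    qed
  qed
  have gen: "gen x w (the (z w))" if w: "w \<in> dom z" for w
  proof -
    obtain L b q where fL: "finite L" and b: "bij_betw b L (blocks_in y w)" and q: "q \<in> P L"
      and zw: "the (z w) = cmp L q b (\<lambda>l. the (y (b l)))"
      using H2[OF w] unfolding gen_def by blast
    have bxw: "blocks_in x w \<subseteq> dom x" unfolding blocks_in_def by blast
    have byw: "blocks_in y w \<subseteq> dom y" unfolding blocks_in_def by blast
    have fbx: "finite (blocks_in x w)"
      using finite_subset[OF bxw part_finite[OF PiP_D[OF x] fI]] .
    obtain B where B: "bij_betw B {0..<card (blocks_in x w)} (blocks_in x w)"
      using ex_bij_betw_nat_finite[OF fbx] by (elim exE)
    define M where "M = {0..<card (blocks_in x w)}"
    have B: "bij_betw B M (blocks_in x w)" using B M_def by simp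
    have fM: "finite M" unfolding M_def by simp
    define Ll where "Ll l = {m \<in> M. B m \<subseteq> b l}" for l
    have bl: "b l \<in> dom y" "b l \<subseteq> w" if "l \<in> L" for l
      using bij_betw_apply[OF b that] unfolding blocks_in_def by auto
    have BLl: "bij_betw B (Ll l) (blocks_in x (b l))" if l: "l \<in> L" for l
    proof -
      have "B ` Ll l = blocks_in x (b l)"
      proof
        show "B ` Ll l \<subseteq> blocks_in x (b l)"
          using bij_betw_apply[OF B] unfolding Ll_def blocks_in_def by blast
        show "blocks_in x (b l) \<subseteq> B ` Ll l"
        proof
          fix u assume u: "u \<in> blocks_in x (b l)"
          then have "u \<in> blocks_in x w" using bl(2)[OF l] unfolding blocks_in_def by auto
          then obtain m where "m \<in> M" "u = B m" using B unfolding bij_betw_def by blast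
          then show "u \<in> B ` Ll l" using u unfolding Ll_def blocks_in_def by blast
        qed
      qed
      moreover have "Ll l \<subseteq> M" unfolding Ll_def by blast
      ultimately show ?thesis using bij_sub[OF B] by metis
    qed
    have "\<forall>l\<in>L. \<exists>ql\<in>P (Ll l). the (y (b l)) = cmp (Ll l) ql B (\<lambda>m. the (x (B m)))"
    proof
      fix l assume l: "l \<in> L"
      have fLl: "finite (Ll l)" using fM unfolding Ll_def by simp
      show "\<exists>ql\<in>P (Ll l). the (y (b l)) = cmp (Ll l) ql B (\<lambda>m. the (x (B m)))"
        using gen_any_label[OF x fI conjunct2[OF H1[OF bl(1)[OF l]]] fLl BLl[OF l]] .
    qed
    then obtain ql where ql: "\<And>l. l \<in> L \<Longrightarrow> ql l \<in> P (Ll l)"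
      and yl: "\<And>l. l \<in> L \<Longrightarrow> the (y (b l)) = cmp (Ll l) (ql l) B (\<lambda>m. the (x (B m)))"
      by metis
    have Bne: "B m \<noteq> {}" if "m \<in> M" for m
      using bij_betw_apply[OF B that] bxw part_ne[OF PiP_D[OF x]] by blast
    have ca1: "comp_args P L b (\<lambda>l. the (y (b l)))" using ca_blocks[OF y fI b byw fL] .
    have ca2: "comp_args P L Ll ql"
      unfolding comp_args_def
    proof (intro conjI ballI)
      show "finite L" by fact
      fix l assume "l \<in> L"
      show "finite (Ll l)" using fM unfolding Ll_def by simp
      show "ql l \<in> P (Ll l)" using ql \<open>l \<in> L\<close> .
    next
      show "disjoint_family_on Ll L"
        unfolding disjoint_family_on_def
      proof (intro ballI impI)
        fix l l' assume l: "l \<in> L" and l': "l' \<in> L" and ne: "l \<noteq> l'"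
        show "Ll l \<inter> Ll l' = {}"
        proof (rule ccontr)
          assume "Ll l \<inter> Ll l' \<noteq> {}"
          then obtain m where m: "m \<in> M" "B m \<subseteq> b l" "B m \<subseteq> b l'" unfolding Ll_def by blast
          obtain i where "i \<in> B m" using Bne[OF m(1)] by blast
          then have "b l = b l'" using part_uniq[OF PiP_D[OF y] bl(1)[OF l] bl(1)[OF l']] m by blast
          then show False using lab_inj[OF b l l'] ne by simp
        qed
      qed
    qed
    have UM: "\<Union>(Ll ` L) = M"
    proof
      show "\<Union>(Ll ` L) \<subseteq> M" unfolding Ll_def by blast
      show "M \<subseteq> \<Union>(Ll ` L)"
      proof
        fix m assume m: "m \<in> M"
        have Bm: "B m \<in> dom x" "B m \<subseteq> w" using bij_betw_apply[OF B m] unfolding blocks_in_def by auto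
        obtain i where i: "i \<in> B m" using Bne[OF m] by blast
        then obtain v where v: "v \<in> blocks_in y w" "i \<in> v" using H2[OF w] Bm(2) by blast
        then have vd: "v \<in> dom y" unfolding blocks_in_def by auto
        obtain v' where v': "v' \<in> dom y" "B m \<subseteq> v'" using le_refines[OF l1 fI Bm(1)] by blast
        have "v' = v" using part_uniq[OF PiP_D[OF y] v'(1) vd] v'(2) i v(2) by blast
        then have "B m \<subseteq> v" using v'(2) by simp
        obtain l where "l \<in> L" "v = b l" using v(1) b unfolding bij_betw_def by blast
        then show "m \<in> \<Union>(Ll ` L)" using m \<open>B m \<subseteq> v\<close> unfolding Ll_def by blast
      qed
    qed
    have ca3: "comp_args P (\<Union>(Ll ` L)) B (\<lambda>m. the (x (B m)))"
      using ca_blocks[OF x fI B bxw fM] UM by simp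
    have UB: "\<Union>(B ` Ll l) = b l" if "l \<in> L" for l
    proof -
      have "B ` Ll l = blocks_in x (b l)" using BLl[OF that] unfolding bij_betw_def by blast
      then show ?thesis using H1[OF bl(1)[OF that]] by simp
    qed
    have "cmp (\<Union>(Ll ` L)) (cmp L q Ll ql) B (\<lambda>m. the (x (B m)))
       = cmp L q (\<lambda>l. \<Union>(B ` Ll l)) (\<lambda>l. cmp (Ll l) (ql l) B (\<lambda>m. the (x (B m))))"
      using cmp_assoc[OF q ca2 ca3] .
    also have "\<dots> = cmp L q b (\<lambda>l. the (y (b l)))"
      by (rule sym, rule cmp_cong[OF q ca1]) (simp_all add: UB yl)
    finally have eq: "the (z w) = cmp M (cmp L q Ll ql) B (\<lambda>m. the (x (B m)))" using zw UM by simp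
    have "cmp L q Ll ql \<in> P M" using cmp_in[OF q ca2] UM by simp
    then show ?thesis unfolding gen_def using fM B eq by blast
  qed
  show ?thesis unfolding le_char[OF fI] using x z union gen by blast
qed

lemma zero_PiP: "finite I \<Longrightarrow> pi_zero e I \<in> PiP P I"
proof -
  have dom: "dom (pi_zero e I) = (\<lambda>i. {i}) ` I" unfolding pi_zero_def by (auto split: if_splits)
  have "the (pi_zero e I u) \<in> P u" if "u \<in> dom (pi_zero e I)" for u
    using that dom e_in unfolding pi_zero_def by auto
  then show ?thesis unfolding PiP_def using dom partition_on_singletons by auto
qed

lemma zero_at: "i \<in> I \<Longrightarrow> pi_zero e I {i} = Some (e i)"
  unfolding pi_zero_def by auto

lemma zero_le:
  assumes y: "y \<in> PiP P I" and fI: "finite I"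
  shows "le_Pi P cmp I (pi_zero e I) y"
  unfolding le_char[OF fI]
proof (intro conjI ballI)
  show "pi_zero e I \<in> PiP P I" using zero_PiP[OF fI] .
  show "y \<in> PiP P I" by fact
  fix w assume w: "w \<in> dom y"
  have wI: "w \<subseteq> I" using part_sub[OF PiP_D[OF y] w] .
  have dom: "dom (pi_zero e I) = (\<lambda>i. {i}) ` I" unfolding pi_zero_def by (auto split: if_splits)
  have bi: "blocks_in (pi_zero e I) w = (\<lambda>i. {i}) ` w" unfolding blocks_in_def dom using wI by auto
  then show "\<Union>(blocks_in (pi_zero e I) w) = w" by simp
  have fw: "finite w" using finite_subset[OF wI fI] .
  have yw: "the (y w) \<in> P w" using PiP_val[OF y w] .
  have ca: "comp_args P w (\<lambda>i. {i}) e"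
    unfolding comp_args_def disjoint_family_on_def using fw e_in by auto
  have "the (y w) = cmp w (the (y w)) (\<lambda>i. {i}) e" using cmp_unit_r[OF fw yw] by simp
  also have "\<dots> = cmp w (the (y w)) (\<lambda>i. {i}) (\<lambda>l. the (pi_zero e I {l}))"
    by (rule cmp_cong[OF yw ca]) (use wI zero_at in auto)
  finally show "gen (pi_zero e I) w (the (y w))"
    unfolding gen_def bi using fw yw by (intro exI[of _ w] exI[of _ "\<lambda>i. {i}"] exI[of _ "the (y w)"])
      (auto simp: bij_betw_def inj_on_def)
qed

end


context OP begin

definition U :: "(nat \<Rightarrow> nat set) \<Rightarrow> nat set \<Rightarrow> nat set" where
  "U b v = \<Union>(b ` v)"

lemma U_inj:
  assumes x: "x \<in> PiP P I" and b: "bij_betw b L (dom x)" and v: "v \<subseteq> L" and v': "v' \<subseteq> L"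
    and eq: "U b v = U b v'"
  shows "v = v'"
proof
  show "v \<subseteq> v'"
  proof
    fix l assume l: "l \<in> v"
    then have "b l \<subseteq> \<Union>(b ` v')" using eq unfolding U_def by blast
    then show "l \<in> v'" using lab_sub[OF x b _ v'] l v by blast
  qed
  show "v' \<subseteq> v"
  proof
    fix l assume l: "l \<in> v'"
    then have "b l \<subseteq> \<Union>(b ` v)" using eq unfolding U_def by blast
    then show "l \<in> v" using lab_sub[OF x b _ v] l v' by blast
  qed
qed

lemma U_mono_iff:
  assumes x: "x \<in> PiP P I" and b: "bij_betw b L (dom x)" and v: "v \<subseteq> L" and v': "v' \<subseteq> L"
  shows "U b v \<subseteq> U b v' \<longleftrightarrow> v \<subseteq> v'"
proof
  assume "U b v \<subseteq> U b v'"
  then show "v \<subseteq> v'" using lab_sub[OF x b _ v'] v unfolding U_def by blast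
qed (auto simp: U_def)

lemma blocks_in_F:
  assumes x: "x \<in> PiP P I" and b: "bij_betw b L (dom x)" and a: "a \<in> PiP P L" and v': "v' \<subseteq> L"
  shows "blocks_in (compfam cmp b a x) (U b v') = U b ` blocks_in a v'"
proof -
  have dom: "dom (compfam cmp b a x) = U b ` dom a" using compfam_dom[OF x b a] unfolding U_def by simp
  have sub: "v \<subseteq> L" if "v \<in> dom a" for v using part_sub[OF PiP_D[OF a] that] .
  show ?thesis unfolding blocks_in_def dom using U_mono_iff[OF x b sub v'] by auto
qed

lemma F_le_iff:
  assumes x: "x \<in> PiP P I" and fI: "finite I" and b: "bij_betw b L (dom x)"
    and a: "a \<in> PiP P L" and a': "a' \<in> PiP P L"
  shows "le_Pi P cmp L a a' \<longleftrightarrow> le_Pi P cmp I (compfam cmp b a x) (compfam cmp b a' x)"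
proof -
  have fL: "finite L" using finite_lab[OF x fI b] .
  define Fa where "Fa = compfam cmp b a x"
  define Fa' where "Fa' = compfam cmp b a' x"
  have FaP: "Fa \<in> PiP P I" unfolding Fa_def using compfam_PiP[OF x fI b a] .
  have Fa'P: "Fa' \<in> PiP P I" unfolding Fa'_def using compfam_PiP[OF x fI b a'] .
  have domFa': "dom Fa' = U b ` dom a'" using compfam_dom[OF x b a'] unfolding Fa'_def U_def by simp
  have domFa: "dom Fa = U b ` dom a" using compfam_dom[OF x b a] unfolding Fa_def U_def by simp
  have subL: "v \<subseteq> L" if "v \<in> dom a" for v using part_sub[OF PiP_D[OF a] that] .
  have subL': "v \<subseteq> L" if "v \<in> dom a'" for v using part_sub[OF PiP_D[OF a'] that] .
  have Fat: "the (Fa (U b v)) = cmp v (the (a v)) b (\<lambda>l. the (x (b l)))" if "v \<in> dom a" for v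
    using compfam_at[OF x b a that] unfolding Fa_def U_def by simp
  have Fa't: "the (Fa' (U b v)) = cmp v (the (a' v)) b (\<lambda>l. the (x (b l)))" if "v \<in> dom a'" for v
    using compfam_at[OF x b a' that] unfolding Fa'_def U_def by simp
  have cav: "comp_args P v b (\<lambda>l. the (x (b l)))" if "v \<subseteq> L" for v
    using ca_blocks[OF x fI bij_sub[OF b that] _ finite_subset[OF that fL]] bij_betw_apply[OF b] that by blast
  have bFa: "blocks_in Fa (U b v') = U b ` blocks_in a v'" if "v' \<subseteq> L" for v'
    using blocks_in_F[OF x b a that] unfolding Fa_def .
  have bia: "blocks_in a v' \<subseteq> dom a" for v' unfolding blocks_in_def by blast
  show ?thesis unfolding Fa_def[symmetric] Fa'_def[symmetric]
  proof
    assume le: "le_Pi P cmp L a a'"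
    show "le_Pi P cmp I Fa Fa'"
      unfolding le_char[OF fI]
    proof (intro conjI ballI FaP Fa'P)
      fix w' assume "w' \<in> dom Fa'"
      then obtain v' where v': "v' \<in> dom a'" and w': "w' = U b v'" using domFa' by blast
      have H: "\<Union>(blocks_in a v') = v'" "gen a v' (the (a' v'))" using le_imp(3)[OF le fL v'] by auto
      have "\<Union>(blocks_in Fa w') = \<Union>(U b ` blocks_in a v')" using bFa[OF subL'[OF v']] w' by simp
      also have "\<dots> = U b (\<Union>(blocks_in a v'))" unfolding U_def by blast
      finally show "\<Union>(blocks_in Fa w') = w'" using H(1) w' by simp
      obtain M B q where fM: "finite M" and B: "bij_betw B M (blocks_in a v')" and q: "q \<in> P M"
        and av: "the (a' v') = cmp M q B (\<lambda>m. the (a (B m)))" using H(2) unfolding gen_def by blast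
      have UBM: "\<Union>(B ` M) = v'" using H(1) B unfolding bij_betw_def by simp
      have caM: "comp_args P M B (\<lambda>m. the (a (B m)))" using ca_blocks[OF a fL B bia fM] .
      have Bd: "B m \<in> dom a" if "m \<in> M" for m using bij_betw_apply[OF B that] bia by blast
      have UB: "bij_betw (U b \<circ> B) M (blocks_in Fa w')"
      proof -
        have "inj_on (U b) (blocks_in a v')"
        proof (rule inj_onI)
          fix v1 v2 assume v1: "v1 \<in> blocks_in a v'" and v2: "v2 \<in> blocks_in a v'" and eq: "U b v1 = U b v2"
          have "v1 \<subseteq> L" "v2 \<subseteq> L" using subL v1 v2 bia by blast+
          then show "v1 = v2" using U_inj[OF x b _ _ eq] by blast
        qed
        then have UB: "bij_betw (U b) (blocks_in a v') (U b ` blocks_in a v')"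
          by (simp add: inj_on_imp_bij_betw)
        then show ?thesis using bij_betw_trans[OF B] bFa[OF subL'[OF v']] w' by simp
      qed
      have bFw: "blocks_in Fa w' \<subseteq> dom Fa" unfolding blocks_in_def by blast
      have caF: "comp_args P M (U b \<circ> B) (\<lambda>m. the (Fa ((U b \<circ> B) m)))"
        using ca_blocks[OF FaP fI UB bFw fM] .
      have "the (Fa' w') = cmp v' (cmp M q B (\<lambda>m. the (a (B m)))) b (\<lambda>l. the (x (b l)))"
        using Fa't[OF v'] w' av by simp
      also have "\<dots> = cmp M q (\<lambda>m. \<Union>(b ` B m)) (\<lambda>m. cmp (B m) (the (a (B m))) b (\<lambda>l. the (x (b l))))"
        using cmp_assoc[OF q caM] cav[OF subL'[OF v']] UBM by simp
      also have "\<dots> = cmp M q (U b \<circ> B) (\<lambda>m. the (Fa ((U b \<circ> B) m)))"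
        by (rule sym, rule cmp_cong[OF q caF]) (use Bd Fat in \<open>auto simp: U_def\<close>)
      finally have eq: "the (Fa' w') = cmp M q (U b \<circ> B) (\<lambda>m. the (Fa ((U b \<circ> B) m)))" .
      show "gen Fa w' (the (Fa' w'))" unfolding gen_def using UB fM q eq by blast
    qed
  next
    assume le: "le_Pi P cmp I Fa Fa'"
    show "le_Pi P cmp L a a'"
      unfolding le_char[OF fL]
    proof (intro conjI ballI a a')
      fix v' assume v': "v' \<in> dom a'"
      have vL: "v' \<subseteq> L" using subL'[OF v'] .
      have w': "U b v' \<in> dom Fa'" using domFa' v' by blast
      have H: "\<Union>(blocks_in Fa (U b v')) = U b v'" "gen Fa (U b v') (the (Fa' (U b v')))"
        using le_imp(3)[OF le fI w'] by auto
      have "U b (\<Union>(blocks_in a v')) = \<Union>(U b ` blocks_in a v')" unfolding U_def by blast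
      also have "\<dots> = U b v'" using H(1) bFa[OF vL] by simp
      finally have Ueq: "U b (\<Union>(blocks_in a v')) = U b v'" .
      have "\<Union>(blocks_in a v') \<subseteq> L" using subL unfolding blocks_in_def by blast
      then have Ua: "\<Union>(blocks_in a v') = v'" using U_inj[OF x b _ vL Ueq] by blast
      then show "\<Union>(blocks_in a v') = v'" .
      obtain M B q where fM: "finite M" and B: "bij_betw B M (blocks_in Fa (U b v'))" and q: "q \<in> P M"
        and fv: "the (Fa' (U b v')) = cmp M q B (\<lambda>m. the (Fa (B m)))" using H(2) unfolding gen_def by blast
      define c where "c m = (SOME v. v \<in> blocks_in a v' \<and> B m = U b v)" for m
      have c: "c m \<in> blocks_in a v' \<and> B m = U b (c m)" if m: "m \<in> M" for m
      proof -
        have "B m \<in> U b ` blocks_in a v'" using bij_betw_apply[OF B m] bFa[OF vL] by simp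
        then have "\<exists>v. v \<in> blocks_in a v' \<and> B m = U b v" by blast
        then show ?thesis unfolding c_def by (rule someI_ex)
      qed
      have cd: "c m \<in> dom a" if "m \<in> M" for m using c[OF that] bia by blast
      have cbij: "bij_betw c M (blocks_in a v')"
        unfolding bij_betw_def
      proof
        show "inj_on c M"
        proof (rule inj_onI)
          fix m m' assume "m \<in> M" "m' \<in> M" "c m = c m'"
          then have "B m = B m'" using c by metis
          then show "m = m'" using lab_inj[OF B] \<open>m \<in> M\<close> \<open>m' \<in> M\<close> by blast
        qed
        show "c ` M = blocks_in a v'"
        proof
          show "c ` M \<subseteq> blocks_in a v'" using c by blast
          show "blocks_in a v' \<subseteq> c ` M"
          proof
            fix v assume v: "v \<in> blocks_in a v'"
            then have "U b v \<in> blocks_in Fa (U b v')" using bFa[OF vL] by blast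
            then obtain m where m: "m \<in> M" "U b v = B m" using B unfolding bij_betw_def by blast
            then have "U b v = U b (c m)" using c by metis
            moreover have "v \<subseteq> L" "c m \<subseteq> L" using subL v c[OF m(1)] bia by blast+
            ultimately have "v = c m" using U_inj[OF x b] by metis
            then show "v \<in> c ` M" using m by blast
          qed
        qed
      qed
      have UcM: "\<Union>(c ` M) = v'" using cbij Ua unfolding bij_betw_def by simp
      have caM: "comp_args P M c (\<lambda>m. the (a (c m)))" using ca_blocks[OF a fL cbij bia fM] .
      have "cmp v' (the (a' v')) b (\<lambda>l. the (x (b l))) = the (Fa' (U b v'))" using Fa't[OF v'] by simp
      also have "\<dots> = cmp M q (\<lambda>m. \<Union>(b ` c m)) (\<lambda>m. cmp (c m) (the (a (c m))) b (\<lambda>l. the (x (b l))))"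
        unfolding fv by (rule cmp_cong[OF q ca_blocks[OF FaP fI B _ fM]])
           (use c cd Fat in \<open>auto simp: U_def blocks_in_def\<close>)
      also have "\<dots> = cmp v' (cmp M q c (\<lambda>m. the (a (c m)))) b (\<lambda>l. the (x (b l)))"
        using cmp_assoc[OF q caM] cav[OF vL] UcM by simp
      finally have eq: "cmp v' (the (a' v')) b (\<lambda>l. the (x (b l)))
          = cmp v' (cmp M q c (\<lambda>m. the (a (c m)))) b (\<lambda>l. the (x (b l)))" .
      have in1: "the (a' v') \<in> P v'" using PiP_val[OF a' v'] .
      have in2: "cmp M q c (\<lambda>m. the (a (c m))) \<in> P v'" using cmp_in[OF q caM] UcM by simp
      have "the (a' v') = cmp M q c (\<lambda>m. the (a (c m)))"
        using basic_inj[OF cav[OF vL] in1 in2 eq] .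
      then show "gen a v' (the (a' v'))" unfolding gen_def using fM cbij q by blast
    qed
  qed
qed

end


context OP begin

definition R :: "nat set \<Rightarrow> (nat \<Rightarrow> nat) \<Rightarrow> nat set \<Rightarrow> (nat set \<Rightarrow> 'b option) \<Rightarrow> (nat set \<Rightarrow> 'b option)" where
  "R L s L' y = (\<lambda>w. if w \<subseteq> L' \<and> inv_into L s ` w \<in> dom y
      then Some (ren (inv_into L s ` w) s (the (y (inv_into L s ` w)))) else None)"

lemma img_inv:
  assumes s: "bij_betw s L L'" and u: "u \<subseteq> L"
  shows "inv_into L s ` (s ` u) = u"
proof -
  have "inj_on s L" using s unfolding bij_betw_def by blast
  then show ?thesis using u by (simp add: image_image inv_into_f_f subset_iff cong: image_cong)
qed

lemma img_inv2:
  assumes s: "bij_betw s L L'" and w: "w \<subseteq> L'"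
  shows "s ` (inv_into L s ` w) = w"
  using s w unfolding bij_betw_def by (simp add: image_image f_inv_into_f subset_iff cong: image_cong)

lemma img_inj:
  assumes s: "bij_betw s L L'" and u: "u \<subseteq> L" and v: "v \<subseteq> L" and eq: "s ` u = s ` v"
  shows "u = v"
  using img_inv[OF s u] img_inv[OF s v] eq by metis

lemma img_sub_iff:
  assumes s: "bij_betw s L L'" and u: "u \<subseteq> L" and v: "v \<subseteq> L"
  shows "s ` u \<subseteq> s ` v \<longleftrightarrow> u \<subseteq> v"
  using s u v unfolding bij_betw_def inj_on_def by blast

lemma R_at:
  assumes s: "bij_betw s L L'" and y: "y \<in> PiP P L" and u: "u \<in> dom y"
  shows "R L s L' y (s ` u) = Some (ren u s (the (y u)))"
proof -
  have uL: "u \<subseteq> L" using part_sub[OF PiP_D[OF y] u] .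
  have "s ` u \<subseteq> L'" using s uL unfolding bij_betw_def by blast
  then show ?thesis unfolding R_def using img_inv[OF s uL] u by simp
qed

lemma R_dom:
  assumes s: "bij_betw s L L'" and y: "y \<in> PiP P L"
  shows "dom (R L s L' y) = (\<lambda>u. s ` u) ` dom y"
proof
  show "dom (R L s L' y) \<subseteq> (\<lambda>u. s ` u) ` dom y"
  proof
    fix w assume "w \<in> dom (R L s L' y)"
    then have w: "w \<subseteq> L'" "inv_into L s ` w \<in> dom y" unfolding R_def by (auto split: if_splits)
    then have "w = s ` (inv_into L s ` w)" using img_inv2[OF s] by simp
    then show "w \<in> (\<lambda>u. s ` u) ` dom y" using w(2) by blast
  qed
  show "(\<lambda>u. s ` u) ` dom y \<subseteq> dom (R L s L' y)" using R_at[OF s y] by blast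
qed

lemma R_PiP:
  assumes s: "bij_betw s L L'" and y: "y \<in> PiP P L" and fL: "finite L"
  shows "R L s L' y \<in> PiP P L'"
proof -
  have sub: "u \<subseteq> L" if "u \<in> dom y" for u using part_sub[OF PiP_D[OF y] that] .
  have part: "partition_on L' ((\<lambda>u. s ` u) ` dom y)"
  proof (rule part_I)
    have "\<Union>((\<lambda>u. s ` u) ` dom y) = s ` \<Union>(dom y)" by blast
    also have "\<dots> = L'" using partition_onD1[OF PiP_D[OF y]] s unfolding bij_betw_def by simp
    finally show "\<Union>((\<lambda>u. s ` u) ` dom y) = L'" .
  next
    fix w1 w2 assume w1: "w1 \<in> (\<lambda>u. s ` u) ` dom y" and w2: "w2 \<in> (\<lambda>u. s ` u) ` dom y"
      and ne: "w1 \<inter> w2 \<noteq> {}"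
    obtain u1 u2 where u: "u1 \<in> dom y" "u2 \<in> dom y" "w1 = s ` u1" "w2 = s ` u2" using w1 w2 by blast
    obtain j where "j \<in> w1" "j \<in> w2" using ne by blast
    then obtain i1 i2 where "i1 \<in> u1" "i2 \<in> u2" "s i1 = s i2" using u by blast
    moreover have "i1 \<in> L" "i2 \<in> L" using sub u(1,2) \<open>i1 \<in> u1\<close> \<open>i2 \<in> u2\<close> by blast+
    ultimately have "i1 = i2" using s unfolding bij_betw_def inj_on_def by blast
    then have "u1 = u2" using part_uniq[OF PiP_D[OF y] u(1,2)] \<open>i1 \<in> u1\<close> \<open>i2 \<in> u2\<close> by blast
    then show "w1 = w2" using u by simp
  next
    show "{} \<notin> (\<lambda>u. s ` u) ` dom y" using part_ne[OF PiP_D[OF y]] by blast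
  qed
  have vals: "the (R L s L' y w) \<in> P w" if w: "w \<in> dom (R L s L' y)" for w
  proof -
    obtain u where u: "u \<in> dom y" "w = s ` u" using w R_dom[OF s y] by blast
    have uL: "u \<subseteq> L" using sub u(1) .
    have "bij_betw s u (s ` u)" using bij_sub[OF s uL] .
    then have "ren u s (the (y u)) \<in> P (s ` u)"
      using ren_in[OF finite_subset[OF uL fL] _ PiP_val[OF y u(1)]] by blast
    then show ?thesis using R_at[OF s y u(1)] u(2) by simp
  qed
  show ?thesis unfolding PiP_def using part vals R_dom[OF s y] by simp
qed

lemma R_blocks:
  assumes s: "bij_betw s L L'" and y: "y \<in> PiP P L" and w: "w \<subseteq> L"
  shows "blocks_in (R L s L' y) (s ` w) = (\<lambda>u. s ` u) ` blocks_in y w"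
proof -
  have sub: "u \<subseteq> L" if "u \<in> dom y" for u using part_sub[OF PiP_D[OF y] that] .
  show ?thesis unfolding blocks_in_def R_dom[OF s y] using img_sub_iff[OF s sub w] by auto
qed

lemma R_mono:
  assumes s: "bij_betw s L L'" and fL: "finite L" and le: "le_Pi P cmp L y z"
  shows "le_Pi P cmp L' (R L s L' y) (R L s L' z)"
proof -
  have fL': "finite L'" using bij_betw_finite[OF s] fL by blast
  have y: "y \<in> PiP P L" and z: "z \<in> PiP P L" using le_imp[OF le fL] by auto
  have suby: "u \<subseteq> L" if "u \<in> dom y" for u using part_sub[OF PiP_D[OF y] that] .
  have subz: "u \<subseteq> L" if "u \<in> dom z" for u using part_sub[OF PiP_D[OF z] that] .
  show ?thesis unfolding le_char[OF fL']
  proof (intro conjI ballI R_PiP[OF s _ fL] y z)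
    fix w' assume "w' \<in> dom (R L s L' z)"
    then obtain w where w: "w \<in> dom z" "w' = s ` w" using R_dom[OF s z] by blast
    have wL: "w \<subseteq> L" using subz[OF w(1)] .
    have H: "\<Union>(blocks_in y w) = w" "gen y w (the (z w))" using le_imp(3)[OF le fL w(1)] by auto
    have bR: "blocks_in (R L s L' y) w' = (\<lambda>u. s ` u) ` blocks_in y w" using R_blocks[OF s y wL] w(2) by simp
    have "\<Union>((\<lambda>u. s ` u) ` blocks_in y w) = s ` \<Union>(blocks_in y w)" by (rule image_Union[symmetric])
    then show "\<Union>(blocks_in (R L s L' y) w') = w'" using bR H(1) w(2) by simp
    obtain M B q where fM: "finite M" and B: "bij_betw B M (blocks_in y w)" and q: "q \<in> P M"
      and zw: "the (z w) = cmp M q B (\<lambda>m. the (y (B m)))" using H(2) unfolding gen_def by blast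
    have bia: "blocks_in y w \<subseteq> dom y" unfolding blocks_in_def by blast
    have caM: "comp_args P M B (\<lambda>m. the (y (B m)))" using ca_blocks[OF y fL B bia fM] .
    have UBM: "\<Union>(B ` M) = w" using H(1) B unfolding bij_betw_def by simp
    have inj: "inj_on s (\<Union>(B ` M))" using s wL UBM unfolding bij_betw_def by (metis inj_on_subset)
    have Bd: "B m \<in> dom y" if "m \<in> M" for m using bij_betw_apply[OF B that] bia by blast
    have SB: "bij_betw ((\<lambda>u. s ` u) \<circ> B) M (blocks_in (R L s L' y) w')"
    proof -
      have "inj_on (\<lambda>u. s ` u) (blocks_in y w)"
      proof (rule inj_onI)
        fix v1 v2 assume "v1 \<in> blocks_in y w" "v2 \<in> blocks_in y w" "s ` v1 = s ` v2"
        moreover have "v1 \<subseteq> L" "v2 \<subseteq> L" using suby bia calculation(1,2) by blast+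
        ultimately show "v1 = v2" using img_inj[OF s] by metis
      qed
      then have "bij_betw (\<lambda>u. s ` u) (blocks_in y w) ((\<lambda>u. s ` u) ` blocks_in y w)"
        by (simp add: inj_on_imp_bij_betw)
      then show ?thesis using bij_betw_trans[OF B] bR by simp
    qed
    have "the (R L s L' z w') = ren w s (the (z w))" using R_at[OF s z w(1)] w(2) by simp
    also have "\<dots> = ren (\<Union>(B ` M)) s (cmp M q B (\<lambda>m. the (y (B m))))" using zw UBM by simp
    also have "\<dots> = cmp M q (\<lambda>m. s ` B m) (\<lambda>m. ren (B m) s (the (y (B m))))"
      using cmp_equiv_in[OF q caM inj] .
    also have "\<dots> = cmp M q ((\<lambda>u. s ` u) \<circ> B) (\<lambda>m. the (R L s L' y (((\<lambda>u. s ` u) \<circ> B) m)))"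
    proof (rule cmp_cong[OF q])
      have "bij_betw (\<lambda>m. s ` B m) M (blocks_in (R L s L' y) w')" using SB by (simp add: comp_def)
      moreover have "blocks_in (R L s L' y) w' \<subseteq> dom (R L s L' y)" unfolding blocks_in_def by blast
      ultimately have caR: "comp_args P M (\<lambda>m. s ` B m) (\<lambda>l. the (R L s L' y (s ` B l)))"
        using ca_blocks[OF R_PiP[OF s y fL] fL' _ _ fM] by blast
      then show "comp_args P M (\<lambda>m. s ` B m) (\<lambda>m. ren (B m) s (the (y (B m))))"
        using R_at[OF s y Bd] unfolding comp_args_def by auto
    qed (use R_at[OF s y Bd] in auto)
    finally have eq: "the (R L s L' z w') = cmp M q ((\<lambda>u. s ` u) \<circ> B) (\<lambda>m. the (R L s L' y (((\<lambda>u. s ` u) \<circ> B) m)))" .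
    show "gen (R L s L' y) w' (the (R L s L' z w'))" unfolding gen_def using fM SB q eq by blast
  qed
qed

end


context OP begin

lemma inv_into_cong':
  assumes "\<And>i. i \<in> L \<Longrightarrow> s i = t i"
  shows "inv_into L s = inv_into L t"
proof
  fix z
  have "(\<lambda>x. x \<in> L \<and> s x = z) = (\<lambda>x. x \<in> L \<and> t x = z)" using assms by auto
  then show "inv_into L s z = inv_into L t z" unfolding inv_into_def by simp
qed

lemma R_cong:
  assumes s: "bij_betw s L L'" and st: "\<And>i. i \<in> L \<Longrightarrow> s i = t i" and y: "y \<in> PiP P L" and fL: "finite L"
  shows "R L s L' y = R L t L' y"
proof
  fix w
  have inv: "inv_into L s = inv_into L t" using inv_into_cong'[OF st] .
  show "R L s L' y w = R L t L' y w"
  proof (cases "w \<subseteq> L' \<and> inv_into L s ` w \<in> dom y")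
    case True
    define u where "u = inv_into L s ` w"
    have uL: "u \<subseteq> L" using part_sub[OF PiP_D[OF y]] True unfolding u_def by blast
    have "ren u s (the (y u)) = ren u t (the (y u))"
      using ren_cong[OF finite_subset[OF uL fL] bij_sub[OF s uL] _ PiP_val[OF y]] st uL True
      unfolding u_def by blast
    then show ?thesis unfolding R_def using True inv u_def by simp
  next
    case False
    then show ?thesis unfolding R_def using inv by auto
  qed
qed

lemma R_inv:
  assumes s: "bij_betw s L L'" and y: "y \<in> PiP P L" and fL: "finite L"
  shows "R L' (inv_into L s) L (R L s L' y) = y"
proof
  fix w
  define t where "t = inv_into L s"
  have t: "bij_betw t L' L" unfolding t_def using bij_betw_inv_into[OF s] .
  have it: "inv_into L' t i = s i" if "i \<in> L" for i
  proof -
    have "t (s i) = i" unfolding t_def using s that by (simp add: bij_betw_def inv_into_f_f)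
    moreover have "s i \<in> L'" using bij_betw_apply[OF s that] .
    ultimately show ?thesis using t by (metis bij_betw_def inv_into_f_f)
  qed
  have suby: "u \<subseteq> L" if "u \<in> dom y" for u using part_sub[OF PiP_D[OF y] that] .
  have RP: "R L s L' y \<in> PiP P L'" using R_PiP[OF s y fL] .
  show "R L' t L (R L s L' y) w = y w"
  proof (cases "w \<subseteq> L")
    case False
    then have "w \<notin> dom y" using suby by blast
    then show ?thesis using False unfolding R_def[of L' t L] by (auto simp: domIff)
  next
    case True
    have iw: "inv_into L' t ` w = s ` w"
    proof (rule image_cong)
      fix i assume "i \<in> w"
      then have "i \<in> L" using True by blast
      then show "inv_into L' t i = s i" by (rule it)
    qed (rule refl)
    have dom_iff: "s ` w \<in> dom (R L s L' y) \<longleftrightarrow> w \<in> dom y"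
    proof
      assume "s ` w \<in> dom (R L s L' y)"
      then have "s ` w \<in> (\<lambda>u. s ` u) ` dom y" using R_dom[OF s y] by simp
      then obtain u where u: "u \<in> dom y" "s ` w = s ` u" by (elim imageE)
      then have "w = u" using img_inj[OF s True suby[OF u(1)]] by simp
      then show "w \<in> dom y" using u by simp
    next
      assume "w \<in> dom y"
      then have "s ` w \<in> (\<lambda>u. s ` u) ` dom y" by (rule imageI)
      then show "s ` w \<in> dom (R L s L' y)" using R_dom[OF s y] by simp
    qed
    show ?thesis
    proof (cases "w \<in> dom y")
      case False
      then show ?thesis unfolding R_def[of L' t L] iw using dom_iff True by (auto simp: domIff)
    next
      case wd: True
      have fw: "finite w" using finite_subset[OF True fL] .
      have bw: "bij_betw s w (s ` w)" using bij_sub[OF s True] .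
      have sw: "s ` w \<subseteq> L'" using s True unfolding bij_betw_def by blast
      have tw: "bij_betw t (s ` w) w"
        using bij_sub[OF t sw] img_inv[OF s True] unfolding t_def by simp
      have "ren (s ` w) t (ren w s (the (y w))) = ren w (t \<circ> s) (the (y w))"
        using ren_comp[OF fw bw tw PiP_val[OF y wd]] .
      also have "\<dots> = the (y w)"
        by (rule ren_id[OF fw _ PiP_val[OF y wd]]) (use s True in \<open>auto simp: t_def bij_betw_def inv_into_f_f subset_iff\<close>)
      finally have eq: "ren (s ` w) t (ren w s (the (y w))) = the (y w)" .
      have "R L' t L (R L s L' y) w = Some (ren (s ` w) t (the (R L s L' y (s ` w))))"
        unfolding R_def[of L' t L] iw using dom_iff wd True by simp
      also have "\<dots> = Some (the (y w))" using R_at[OF s y wd] eq by simp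
      also have "\<dots> = y w" using wd by (metis domIff option.collapse)
      finally show ?thesis .
    qed
  qed
qed

lemma one_block_PiP:
  assumes p: "p \<in> P L" shows "one_block L p \<in> PiP P L"
proof -
  have "L \<noteq> {}" using P_nonempty_idx[OF p] .
  then have "partition_on L {L}" by (rule partition_on_space)
  then show ?thesis unfolding PiP_def one_block_def using p by auto
qed

lemma R_one:
  assumes s: "bij_betw s L L'" and p: "p \<in> P L"
  shows "R L s L' (one_block L p) = one_block L' (ren L s p)"
proof
  fix w
  have sL: "s ` L = L'" using s unfolding bij_betw_def by blast
  have iL: "inv_into L s ` L' = L" using img_inv[OF s] sL by blast
  have "w \<subseteq> L' \<and> inv_into L s ` w = L \<longleftrightarrow> w = L'"
  proof
    assume "w \<subseteq> L' \<and> inv_into L s ` w = L"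
    then show "w = L'" using img_inv2[OF s] sL by metis
  qed (use iL in simp)
  then show "R L s L' (one_block L p) w = one_block L' (ren L s p) w"
    unfolding R_def one_block_def using iL by auto
qed

end


lemma iso_sym:
  assumes "poset_iso X lx Y ly" shows "poset_iso Y ly X lx"
proof -
  obtain f where f: "bij_betw f X Y" and o: "\<forall>a\<in>X. \<forall>b\<in>X. lx a b \<longleftrightarrow> ly (f a) (f b)"
    using assms unfolding poset_iso_def by blast
  define g where "g = inv_into X f"
  have g: "bij_betw g Y X" unfolding g_def using bij_betw_inv_into[OF f] .
  have fg: "f (g y) = y" if "y \<in> Y" for y
    unfolding g_def using f that by (simp add: bij_betw_def f_inv_into_f)
  have "\<forall>a\<in>Y. \<forall>b\<in>Y. ly a b \<longleftrightarrow> lx (g a) (g b)"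
  proof (intro ballI)
    fix a b assume a: "a \<in> Y" and b: "b \<in> Y"
    have "g a \<in> X" "g b \<in> X" using bij_betw_apply[OF g] a b by auto
    then show "ly a b \<longleftrightarrow> lx (g a) (g b)" using o fg a b by metis
  qed
  then show ?thesis unfolding poset_iso_def using g by blast
qed

lemma iso_trans:
  assumes "poset_iso X lx Y ly" "poset_iso Y ly Z lz" shows "poset_iso X lx Z lz"
proof -
  obtain f where f: "bij_betw f X Y" and o: "\<forall>a\<in>X. \<forall>b\<in>X. lx a b \<longleftrightarrow> ly (f a) (f b)"
    using assms(1) unfolding poset_iso_def by blast
  obtain g where g: "bij_betw g Y Z" and o2: "\<forall>a\<in>Y. \<forall>b\<in>Y. ly a b \<longleftrightarrow> lz (g a) (g b)"
    using assms(2) unfolding poset_iso_def by blast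
  have "bij_betw (g \<circ> f) X Z" using bij_betw_trans[OF f g] .
  moreover have "\<forall>a\<in>X. \<forall>b\<in>X. lx a b \<longleftrightarrow> lz ((g \<circ> f) a) ((g \<circ> f) b)"
  proof (intro ballI)
    fix a b assume a: "a \<in> X" and b: "b \<in> X"
    have "f a \<in> Y" "f b \<in> Y" using bij_betw_apply[OF f] a b by auto
    then show "lx a b \<longleftrightarrow> lz ((g \<circ> f) a) ((g \<circ> f) b)" using o o2 a b by simp
  qed
  ultimately show ?thesis unfolding poset_iso_def by blast
qed

lemma iso_prod:
  assumes len: "length is = n"
    and H: "\<And>k. k < n \<Longrightarrow> poset_iso (C1 k) (l1 k) (C2 (is ! k)) (l2 (is ! k))"
  shows "poset_iso (prod_carrier C1 [0..<n]) (prod_le l1 [0..<n]) (prod_carrier C2 is) (prod_le l2 is)"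
proof -
  have "\<forall>k. \<exists>f. k < n \<longrightarrow> bij_betw f (C1 k) (C2 (is ! k)) \<and>
      (\<forall>a\<in>C1 k. \<forall>b\<in>C1 k. l1 k a b \<longleftrightarrow> l2 (is ! k) (f a) (f b))"
    using H unfolding poset_iso_def by blast
  then obtain f where f: "\<And>k. k < n \<Longrightarrow> bij_betw (f k) (C1 k) (C2 (is ! k))"
    and o: "\<And>k a b. k < n \<Longrightarrow> a \<in> C1 k \<Longrightarrow> b \<in> C1 k \<Longrightarrow> l1 k a b \<longleftrightarrow> l2 (is ! k) (f k a) (f k b)"
    by metis
  define F where "F ts = map (\<lambda>k. f k (ts ! k)) [0..<n]" for ts
  have PC1: "ts \<in> prod_carrier C1 [0..<n] \<longleftrightarrow> length ts = n \<and> (\<forall>k<n. ts ! k \<in> C1 k)" for ts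
    unfolding prod_carrier_def by simp
  have PC2: "us \<in> prod_carrier C2 is \<longleftrightarrow> length us = n \<and> (\<forall>k<n. us ! k \<in> C2 (is ! k))" for us
    unfolding prod_carrier_def using len by simp
  have bij: "bij_betw F (prod_carrier C1 [0..<n]) (prod_carrier C2 is)"
    unfolding bij_betw_def
  proof
    show "inj_on F (prod_carrier C1 [0..<n])"
    proof (rule inj_onI)
      fix ts ts' assume ts: "ts \<in> prod_carrier C1 [0..<n]" and ts': "ts' \<in> prod_carrier C1 [0..<n]"
        and eq: "F ts = F ts'"
      show "ts = ts'"
      proof (rule nth_equalityI)
        show "length ts = length ts'" using ts ts' PC1 by simp
        fix k assume "k < length ts"
        then have k: "k < n" using ts PC1 by simp
        have "f k (ts ! k) = f k (ts' ! k)" using eq k unfolding F_def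
          by (metis (no_types, lifting) add_0 diff_zero length_map length_upt nth_map nth_upt)
        then show "ts ! k = ts' ! k" using f[OF k] ts ts' PC1 k unfolding bij_betw_def inj_on_def by blast
      qed
    qed
    show "F ` prod_carrier C1 [0..<n] = prod_carrier C2 is"
    proof
      show "F ` prod_carrier C1 [0..<n] \<subseteq> prod_carrier C2 is"
        unfolding F_def using PC1 PC2 bij_betw_apply[OF f] by auto
      show "prod_carrier C2 is \<subseteq> F ` prod_carrier C1 [0..<n]"
      proof
        fix us assume us: "us \<in> prod_carrier C2 is"
        define ts where "ts = map (\<lambda>k. inv_into (C1 k) (f k) (us ! k)) [0..<n]"
        have "ts \<in> prod_carrier C1 [0..<n]" unfolding PC1 ts_def
          using us PC2 bij_betw_apply[OF bij_betw_inv_into[OF f]] by auto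
        moreover have "F ts = us"
        proof (rule nth_equalityI)
          show "length (F ts) = length us" using us PC2 unfolding F_def by simp
          fix k assume "k < length (F ts)"
          then have k: "k < n" unfolding F_def by simp
          have "f k (inv_into (C1 k) (f k) (us ! k)) = us ! k"
            using f[OF k] us PC2 k by (simp add: bij_betw_def f_inv_into_f)
          then show "F ts ! k = us ! k" unfolding F_def ts_def using k by simp
        qed
        ultimately show "us \<in> F ` prod_carrier C1 [0..<n]" by blast
      qed
    qed
  qed
  have "\<forall>a\<in>prod_carrier C1 [0..<n]. \<forall>b\<in>prod_carrier C1 [0..<n].
      prod_le l1 [0..<n] a b \<longleftrightarrow> prod_le l2 is (F a) (F b)"
  proof (intro ballI)
    fix a b assume a: "a \<in> prod_carrier C1 [0..<n]" and b: "b \<in> prod_carrier C1 [0..<n]"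
    have "prod_le l2 is (F a) (F b) \<longleftrightarrow> (\<forall>k<n. l2 (is ! k) (f k (a ! k)) (f k (b ! k)))"
      unfolding prod_le_def F_def using len by simp
    also have "\<dots> \<longleftrightarrow> (\<forall>k<n. l1 k (a ! k) (b ! k))" using o a b PC1 by auto
    also have "\<dots> \<longleftrightarrow> prod_le l1 [0..<n] a b" unfolding prod_le_def by simp
    finally show "prod_le l1 [0..<n] a b \<longleftrightarrow> prod_le l2 is (F a) (F b)" by simp
  qed
  then show ?thesis unfolding poset_iso_def using bij by blast
qed

context OP begin

definition Iv :: "nat set \<Rightarrow> 'b \<Rightarrow> (nat set \<Rightarrow> 'b option) set" where
  "Iv L p = {y \<in> PiP P L. le_Pi P cmp L (pi_zero e L) y \<and> le_Pi P cmp L y (one_block L p)}"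

lemma inv_inv:
  assumes s: "bij_betw s L L'" and i: "i \<in> L"
  shows "inv_into L' (inv_into L s) i = s i"
proof -
  have t: "bij_betw (inv_into L s) L' L" using bij_betw_inv_into[OF s] .
  have "inv_into L s (s i) = i" using s i by (simp add: bij_betw_def inv_into_f_f)
  moreover have "s i \<in> L'" using bij_betw_apply[OF s i] .
  ultimately show ?thesis using t by (metis bij_betw_def inv_into_f_f)
qed

lemma relabel_iso:
  assumes s: "bij_betw s L L'" and fL: "finite L" and p: "p \<in> P L"
  shows "poset_iso (Iv L p) (le_Pi P cmp L) (Iv L' (ren L s p)) (le_Pi P cmp L')"
proof -
  define t where "t = inv_into L s"
  have t: "bij_betw t L' L" unfolding t_def using bij_betw_inv_into[OF s] .
  have fL': "finite L'" using bij_betw_finite[OF s] fL by blast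
  have p': "ren L s p \<in> P L'" using ren_in[OF fL s p] .
  have tsp: "ren L' t (ren L s p) = p"
  proof -
    have "ren L' t (ren L s p) = ren L (t \<circ> s) p" using ren_comp[OF fL s t p] .
    also have "\<dots> = p" by (rule ren_id[OF fL _ p]) (use s in \<open>simp add: t_def bij_betw_def inv_into_f_f\<close>)
    finally show ?thesis .
  qed
  define f where "f = R L s L'"
  have gg: "R L' t L (f y) = y" if "y \<in> PiP P L" for y
    unfolding f_def t_def using R_inv[OF s that fL] .
  have ff: "f (R L' t L z) = z" if z: "z \<in> PiP P L'" for z
  proof -
    have Rz: "R L' t L z \<in> PiP P L" using R_PiP[OF t z fL'] .
    have "f (R L' t L z) = R L (inv_into L' t) L' (R L' t L z)"
      unfolding f_def by (rule R_cong[OF s _ Rz fL]) (simp add: inv_inv[OF s] t_def)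
    also have "\<dots> = z" using R_inv[OF t z fL'] .
    finally show ?thesis .
  qed
  have intoI: "f y \<in> Iv L' (ren L s p)" if y: "y \<in> Iv L p" for y
  proof -
    have yP: "y \<in> PiP P L" and le: "le_Pi P cmp L y (one_block L p)" using y unfolding Iv_def by auto
    have fP: "f y \<in> PiP P L'" unfolding f_def using R_PiP[OF s yP fL] .
    have "le_Pi P cmp L' (f y) (f (one_block L p))" unfolding f_def using R_mono[OF s fL le] .
    then have "le_Pi P cmp L' (f y) (one_block L' (ren L s p))" unfolding f_def using R_one[OF s p] by simp
    then show ?thesis unfolding Iv_def using fP zero_le[OF fP fL'] by simp
  qed
  have bk: "R L' t L z \<in> Iv L p" if z: "z \<in> Iv L' (ren L s p)" for z
  proof -
    have zP: "z \<in> PiP P L'" and le: "le_Pi P cmp L' z (one_block L' (ren L s p))" using z unfolding Iv_def by auto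
    have gP: "R L' t L z \<in> PiP P L" using R_PiP[OF t zP fL'] .
    have "le_Pi P cmp L (R L' t L z) (R L' t L (one_block L' (ren L s p)))" using R_mono[OF t fL' le] .
    then have "le_Pi P cmp L (R L' t L z) (one_block L p)" using R_one[OF t p'] tsp by simp
    then show ?thesis unfolding Iv_def using gP zero_le[OF gP fL] by simp
  qed
  have IvP: "y \<in> PiP P L" if "y \<in> Iv L p" for y using that unfolding Iv_def by simp
  have IvP': "z \<in> PiP P L'" if "z \<in> Iv L' (ren L s p)" for z using that unfolding Iv_def by simp
  have bij: "bij_betw f (Iv L p) (Iv L' (ren L s p))"
    unfolding bij_betw_def
  proof
    show "inj_on f (Iv L p)"
      by (rule inj_onI) (metis gg IvP)
    show "f ` Iv L p = Iv L' (ren L s p)"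
    proof
      show "f ` Iv L p \<subseteq> Iv L' (ren L s p)" using intoI by blast
      show "Iv L' (ren L s p) \<subseteq> f ` Iv L p"
      proof
        fix z assume z: "z \<in> Iv L' (ren L s p)"
        then have "z = f (R L' t L z)" using ff IvP' by simp
        then show "z \<in> f ` Iv L p" using bk[OF z] by blast
      qed
    qed
  qed
  have "\<forall>a\<in>Iv L p. \<forall>b\<in>Iv L p. le_Pi P cmp L a b \<longleftrightarrow> le_Pi P cmp L' (f a) (f b)"
  proof (intro ballI iffI)
    fix a b assume a: "a \<in> Iv L p" and b: "b \<in> Iv L p"
    show "le_Pi P cmp L a b \<Longrightarrow> le_Pi P cmp L' (f a) (f b)" unfolding f_def using R_mono[OF s fL] by blast
    assume "le_Pi P cmp L' (f a) (f b)"
    then have "le_Pi P cmp L (R L' t L (f a)) (R L' t L (f b))" using R_mono[OF t fL'] by blast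
    then show "le_Pi P cmp L a b" using gg IvP a b by simp
  qed
  then show ?thesis unfolding poset_iso_def using bij by blast
qed

end


context OP begin

lemma upper_iso:
  assumes x: "x \<in> PiP P I" and fI: "finite I" and p: "p \<in> P I"
    and le: "le_Pi P cmp I x (one_block I p)"
  shows "\<exists>k q. k \<ge> 1 \<and> q \<in> P {1..k} \<and>
     poset_iso {y \<in> PiP P I. le_Pi P cmp I x y \<and> le_Pi P cmp I y (one_block I p)} (le_Pi P cmp I)
               (Iv {1..k} q) (le_Pi P cmp {1..k})"
proof -
  define top where "top = one_block I p"
  have topP: "top \<in> PiP P I" unfolding top_def using one_block_PiP[OF p] .
  have Ine: "I \<noteq> {}" using P_nonempty_idx[OF p] .
  have fx: "finite (dom x)" using part_finite[OF PiP_D[OF x] fI] .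
  define k where "k = card (dom x)"
  obtain b where b: "bij_betw b {1..k} (dom x)" unfolding k_def using ex_bij_betw_nat_finite_1[OF fx] by (elim exE)
  define L where "L = {1..k}"
  have b: "bij_betw b L (dom x)" using b L_def by simp
  have fL: "finite L" unfolding L_def by simp
  have "dom x \<noteq> {}" using partition_onD1[OF PiP_D[OF x]] Ine by auto
  then have k1: "k \<ge> 1" unfolding k_def using fx by (simp add: Suc_le_eq card_gt_0_iff)
  have H: "\<And>w. w \<in> dom top \<Longrightarrow> \<Union>(blocks_in x w) = w \<and> gen x w (the (top w))"
    using le_imp(3)[OF le fI] unfolding top_def by blast
  have "\<exists>a\<in>PiP P L. top = compfam cmp b a x" by (rule le_fixed[OF x topP fI _ b]) (rule H)
  then obtain at where at: "at \<in> PiP P L" and topF: "top = compfam cmp b at x" by (elim bexE)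
  have domtop: "dom top = {I}" unfolding top_def one_block_def by simp
  have UL: "U b L = I" unfolding U_def using union_lab_all[OF x b] .
  have domat: "dom at = {L}"
  proof
    show "dom at \<subseteq> {L}"
    proof
      fix v assume v: "v \<in> dom at"
      have "U b v \<in> dom top" using compfam_dom[OF x b at] topF v unfolding U_def by blast
      then have "U b v = U b L" using domtop UL by simp
      then have "v = L" using U_inj[OF x b part_sub[OF PiP_D[OF at] v] order_refl] by simp
      then show "v \<in> {L}" by simp
    qed
    have "L \<noteq> {}" unfolding L_def using k1 by simp
    then have "dom at \<noteq> {}" using partition_onD1[OF PiP_D[OF at]] by auto
    then show "{L} \<subseteq> dom at" using \<open>dom at \<subseteq> {L}\<close> by blast
  qed
  define q where "q = the (at L)"
  have q: "q \<in> P L" unfolding q_def using PiP_val[OF at] domat by simp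
  have atq: "at = one_block L q"
  proof
    fix v show "at v = one_block L q v"
    proof (cases "v = L")
      case True
      have "L \<in> dom at" using domat by simp
      then show ?thesis unfolding one_block_def q_def True by (metis domIff fun_upd_same option.collapse)
    next
      case False
      then have "v \<notin> dom at" using domat by simp
      then show ?thesis unfolding one_block_def using False by (simp add: domIff)
    qed
  qed
  define F where "F a = compfam cmp b a x" for a
  have FP: "F a \<in> PiP P I" if "a \<in> PiP P L" for a unfolding F_def using compfam_PiP[OF x fI b that] .
  have Fle: "le_Pi P cmp L a a' \<longleftrightarrow> le_Pi P cmp I (F a) (F a')" if "a \<in> PiP P L" "a' \<in> PiP P L" for a a'
    unfolding F_def using F_le_iff[OF x fI b that] .
  have Ftop: "F at = top" unfolding F_def using topF by simp
  have atP: "one_block L q \<in> PiP P L" using one_block_PiP[OF q] .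
  have IvP: "a \<in> PiP P L" if "a \<in> Iv L q" for a using that unfolding Iv_def by simp
  define Y where "Y = {y \<in> PiP P I. le_Pi P cmp I x y \<and> le_Pi P cmp I y (one_block I p)}"
  have bij: "bij_betw F (Iv L q) Y"
    unfolding bij_betw_def
  proof
    show "inj_on F (Iv L q)"
    proof (rule inj_onI)
      fix a a' assume a: "a \<in> Iv L q" and a': "a' \<in> Iv L q" and eq: "F a = F a'"
      have "le_Pi P cmp I (F a) (F a')" using le_refl[OF FP[OF IvP[OF a]] fI] eq by simp
      then have l1: "le_Pi P cmp L a a'" using Fle[OF IvP[OF a] IvP[OF a']] by simp
      have "le_Pi P cmp I (F a') (F a)" using le_refl[OF FP[OF IvP[OF a]] fI] eq by simp
      then have l2: "le_Pi P cmp L a' a" using Fle[OF IvP[OF a'] IvP[OF a]] by simp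
      show "a = a'" using le_antisym[OF l1 l2 fL] .
    qed
    show "F ` Iv L q = Y"
    proof
      show "F ` Iv L q \<subseteq> Y"
      proof
        fix y assume "y \<in> F ` Iv L q"
        then obtain a where a: "a \<in> Iv L q" "y = F a" by blast
        have aP: "a \<in> PiP P L" using IvP[OF a(1)] .
        have "le_Pi P cmp L a (one_block L q)" using a(1) unfolding Iv_def by simp
        then have "le_Pi P cmp I (F a) (F at)" using Fle[OF aP at] atq by simp
        moreover have "le_Pi P cmp I x (F a)" unfolding le_Pi_def F_def
          using x compfam_PiP[OF x fI b aP] fL b aP by blast
        ultimately show "y \<in> Y" unfolding Y_def using a(2) FP[OF aP] Ftop top_def by simp
      qed
      show "Y \<subseteq> F ` Iv L q"
      proof
        fix y assume y: "y \<in> Y"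
        then have yP: "y \<in> PiP P I" and lxy: "le_Pi P cmp I x y" and lyt: "le_Pi P cmp I y top"
          unfolding Y_def top_def by auto
        have "\<exists>a\<in>PiP P L. y = compfam cmp b a x"
          by (rule le_fixed[OF x yP fI _ b]) (use le_imp(3)[OF lxy fI] in blast)
        then obtain a where aP: "a \<in> PiP P L" and ya: "y = F a" unfolding F_def by blast
        have "le_Pi P cmp L a at" using Fle[OF aP at] lyt ya Ftop by simp
        then have "a \<in> Iv L q" unfolding Iv_def using aP zero_le[OF aP fL] atq by simp
        then show "y \<in> F ` Iv L q" using ya by blast
      qed
    qed
  qed
  have "\<forall>a\<in>Iv L q. \<forall>a'\<in>Iv L q. le_Pi P cmp L a a' \<longleftrightarrow> le_Pi P cmp I (F a) (F a')"
    using Fle IvP by blast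
  then have "poset_iso (Iv L q) (le_Pi P cmp L) Y (le_Pi P cmp I)" unfolding poset_iso_def using bij by blast
  then have "poset_iso Y (le_Pi P cmp I) (Iv L q) (le_Pi P cmp L)" by (rule iso_sym)
  then show ?thesis unfolding Y_def L_def using k1 q L_def by blast
qed

end


definition restr :: "(nat set \<Rightarrow> 'b option) \<Rightarrow> nat set \<Rightarrow> (nat set \<Rightarrow> 'b option)" where
  "restr y v = (\<lambda>u. if u \<subseteq> v then y u else None)"

context OP begin

lemma restr_dom: "dom (restr y v) = blocks_in y v"
  unfolding restr_def blocks_in_def by (auto simp: domIff split: if_splits)

lemma restr_blocks: "w \<subseteq> v \<Longrightarrow> blocks_in (restr y v) w = blocks_in y w"
  using restr_dom[of y v] unfolding blocks_in_def by auto

lemma gen_cong: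
  assumes x: "x \<in> PiP P I" and fI: "finite I" and bi: "blocks_in x' w = blocks_in x w"
    and ag: "\<And>u. u \<in> blocks_in x w \<Longrightarrow> x' u = x u"
  shows "gen x' w p \<longleftrightarrow> gen x w p"
proof -
  have key: "cmp L q b (\<lambda>l. the (x' (b l))) = cmp L q b (\<lambda>l. the (x (b l)))"
    if fL: "finite L" and b: "bij_betw b L (blocks_in x w)" and q: "q \<in> P L" for L b q
  proof -
    have ca: "comp_args P L b (\<lambda>l. the (x (b l)))"
      using ca_blocks[OF x fI b _ fL] unfolding blocks_in_def by blast
    show ?thesis by (rule sym, rule cmp_cong[OF q ca]) (use ag bij_betw_apply[OF b] in auto)
  qed
  show ?thesis unfolding gen_def bi using key by metis
qed

lemma restr_gen:
  assumes y: "y \<in> PiP P I" and fI: "finite I" and wv: "w \<subseteq> v"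
  shows "gen (restr y v) w p \<longleftrightarrow> gen y w p"
  by (rule gen_cong[OF y fI restr_blocks[OF wv]]) (use wv in \<open>auto simp: restr_def blocks_in_def\<close>)

lemma restr_PiP:
  assumes y: "y \<in> PiP P I" and vI: "v \<subseteq> I" and U: "\<Union>(blocks_in y v) = v"
  shows "restr y v \<in> PiP P v"
proof -
  have "partition_on v (blocks_in y v)"
  proof (rule part_I)
    show "\<Union>(blocks_in y v) = v" by fact
    show "\<And>a b. a \<in> blocks_in y v \<Longrightarrow> b \<in> blocks_in y v \<Longrightarrow> a \<inter> b \<noteq> {} \<Longrightarrow> a = b"
      using part_uniq[OF PiP_D[OF y]] unfolding blocks_in_def by blast
    show "{} \<notin> blocks_in y v" using part_ne[OF PiP_D[OF y]] unfolding blocks_in_def by blast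
  qed
  moreover have "the (restr y v u) \<in> P u" if "u \<in> blocks_in y v" for u
    using that PiP_val[OF y] unfolding restr_def blocks_in_def by auto
  ultimately show ?thesis unfolding PiP_def by (simp add: restr_dom)
qed

lemma le_one_block_iff:
  assumes fv: "finite v" and p: "p \<in> P v"
  shows "le_Pi P cmp v z (one_block v p) \<longleftrightarrow> z \<in> PiP P v \<and> \<Union>(blocks_in z v) = v \<and> gen z v p"
  unfolding le_char[OF fv] using one_block_PiP[OF p] by (simp add: one_block_def)

lemma restr_le_top:
  assumes le: "le_Pi P cmp I y th" and fI: "finite I" and v: "v \<in> dom th"
  shows "le_Pi P cmp v (restr y v) (one_block v (the (th v)))"
proof -
  have y: "y \<in> PiP P I" and th: "th \<in> PiP P I" using le_imp[OF le fI] by auto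
  have vI: "v \<subseteq> I" using part_sub[OF PiP_D[OF th] v] .
  have fv: "finite v" using finite_subset[OF vI fI] .
  have H: "\<Union>(blocks_in y v) = v" "gen y v (the (th v))" using le_imp(3)[OF le fI v] by auto
  show ?thesis unfolding le_one_block_iff[OF fv PiP_val[OF th v]]
    using restr_PiP[OF y vI H(1)] restr_blocks[of v v y] H restr_gen[OF y fI order_refl] by simp
qed

lemma restr_le_iff:
  assumes l1: "le_Pi P cmp I y th" and l2: "le_Pi P cmp I y' th" and fI: "finite I"
  shows "le_Pi P cmp I y y' \<longleftrightarrow> (\<forall>v\<in>dom th. le_Pi P cmp v (restr y v) (restr y' v))"
proof -
  have y: "y \<in> PiP P I" and th: "th \<in> PiP P I" using le_imp[OF l1 fI] by auto
  have y': "y' \<in> PiP P I" using le_imp[OF l2 fI] by auto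
  have vI: "v \<subseteq> I" if "v \<in> dom th" for v using part_sub[OF PiP_D[OF th] that] .
  have rP: "restr y v \<in> PiP P v" if "v \<in> dom th" for v
    using restr_PiP[OF y vI[OF that]] le_imp(3)[OF l1 fI that] by blast
  have rP': "restr y' v \<in> PiP P v" if "v \<in> dom th" for v
    using restr_PiP[OF y' vI[OF that]] le_imp(3)[OF l2 fI that] by blast
  have fv: "finite v" if "v \<in> dom th" for v using finite_subset[OF vI[OF that] fI] .
  show ?thesis
  proof
    assume le: "le_Pi P cmp I y y'"
    show "\<forall>v\<in>dom th. le_Pi P cmp v (restr y v) (restr y' v)"
    proof
      fix v assume v: "v \<in> dom th"
      show "le_Pi P cmp v (restr y v) (restr y' v)"
        unfolding le_char[OF fv[OF v]]
      proof (intro conjI ballI rP rP' v)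
        fix w assume "w \<in> dom (restr y' v)"
        then have "w \<in> blocks_in y' v" by (simp add: restr_dom)
        then have w: "w \<in> dom y'" "w \<subseteq> v" unfolding blocks_in_def by auto
        have H: "\<Union>(blocks_in y w) = w" "gen y w (the (y' w))" using le_imp(3)[OF le fI w(1)] by auto
        show "\<Union>(blocks_in (restr y v) w) = w" using restr_blocks[OF w(2), of y] H(1) by simp
        have "the (restr y' v w) = the (y' w)" unfolding restr_def using w(2) by simp
        then show "gen (restr y v) w (the (restr y' v w))" using restr_gen[OF y fI w(2)] H(2) by simp
      qed
    qed
  next
    assume A: "\<forall>v\<in>dom th. le_Pi P cmp v (restr y v) (restr y' v)"
    show "le_Pi P cmp I y y'"
      unfolding le_char[OF fI]
    proof (intro conjI ballI y y')
      fix w assume w: "w \<in> dom y'"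
      obtain v where v: "v \<in> dom th" "w \<subseteq> v" using le_refines[OF l2 fI w] by blast
      have "w \<in> blocks_in y' v" using w v(2) unfolding blocks_in_def by auto
      then have wr: "w \<in> dom (restr y' v)" by (simp add: restr_dom)
      have H: "\<Union>(blocks_in (restr y v) w) = w" "gen (restr y v) w (the (restr y' v w))"
        using le_imp(3)[OF A[rule_format, OF v(1)] fv[OF v(1)] wr] by auto
      show "\<Union>(blocks_in y w) = w" using H(1) restr_blocks[OF v(2), of y] by simp
      have "the (restr y' v w) = the (y' w)" unfolding restr_def using v(2) by simp
      then show "gen y w (the (y' w))" using H(2) restr_gen[OF y fI v(2)] by simp
    qed
  qed
qed

end


context OP begin

lemma lower_iso:
  assumes th: "th \<in> PiP P I" and fI: "finite I" and dv: "distinct vs" and sv: "set vs = dom th"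
  shows "poset_iso {y \<in> PiP P I. le_Pi P cmp I (pi_zero e I) y \<and> le_Pi P cmp I y th} (le_Pi P cmp I)
     (prod_carrier (\<lambda>k. Iv (vs ! k) (the (th (vs ! k)))) [0..<length vs])
     (prod_le (\<lambda>k. le_Pi P cmp (vs ! k)) [0..<length vs])"
proof -
  define n where "n = length vs"
  define Y where "Y = {y \<in> PiP P I. le_Pi P cmp I (pi_zero e I) y \<and> le_Pi P cmp I y th}"
  define C where "C k = Iv (vs ! k) (the (th (vs ! k)))" for k
  define G where "G (y::nat set \<Rightarrow> 'b option) = map (\<lambda>k. restr y (vs ! k)) [0..<n]" for y
  have vk: "vs ! k \<in> dom th" if "k < n" for k using that sv unfolding n_def by (metis nth_mem)
  have vkI: "vs ! k \<subseteq> I" if "k < n" for k using part_sub[OF PiP_D[OF th] vk[OF that]] .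
  have fvk: "finite (vs ! k)" if "k < n" for k using finite_subset[OF vkI[OF that] fI] .
  have thk: "the (th (vs ! k)) \<in> P (vs ! k)" if "k < n" for k using PiP_val[OF th vk[OF that]] .
  have kinj: "k = k'" if "k < n" "k' < n" "vs ! k \<inter> vs ! k' \<noteq> {}" for k k'
  proof -
    have "vs ! k = vs ! k'" using part_uniq[OF PiP_D[OF th] vk[OF that(1)] vk[OF that(2)]] that(3) by blast
    then show ?thesis using dv that(1,2) unfolding n_def by (simp add: nth_eq_iff_index_eq)
  qed
  have PC: "ts \<in> prod_carrier C [0..<n] \<longleftrightarrow> length ts = n \<and> (\<forall>k<n. ts ! k \<in> C k)" for ts
    unfolding prod_carrier_def by simp
  have YP: "y \<in> PiP P I" if "y \<in> Y" for y using that unfolding Y_def by simp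
  have Yle: "le_Pi P cmp I y th" if "y \<in> Y" for y using that unfolding Y_def by simp
  have rPk: "restr y (vs ! k) \<in> PiP P (vs ! k)" if y: "y \<in> Y" and k: "k < n" for y k
    using le_imp(1)[OF restr_le_top[OF Yle[OF y] fI vk[OF k]] fvk[OF k]] .
  have GC: "G y \<in> prod_carrier C [0..<n]" if y: "y \<in> Y" for y
    unfolding PC
  proof (intro conjI allI impI)
    show "length (G y) = n" unfolding G_def by simp
    fix k assume k: "k < n"
    have "G y ! k = restr y (vs ! k)" unfolding G_def using k by simp
    then show "G y ! k \<in> C k" unfolding C_def Iv_def
      using rPk[OF y k] zero_le[OF rPk[OF y k] fvk[OF k]] restr_le_top[OF Yle[OF y] fI vk[OF k]] by simp
  qed
  have ord: "le_Pi P cmp I y y' \<longleftrightarrow> prod_le (\<lambda>k. le_Pi P cmp (vs ! k)) [0..<n] (G y) (G y')"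
    if y: "y \<in> Y" and y': "y' \<in> Y" for y y'
  proof -
    have "le_Pi P cmp I y y' \<longleftrightarrow> (\<forall>v\<in>dom th. le_Pi P cmp v (restr y v) (restr y' v))"
      using restr_le_iff[OF Yle[OF y] Yle[OF y'] fI] .
    also have "\<dots> \<longleftrightarrow> (\<forall>k<n. le_Pi P cmp (vs ! k) (restr y (vs ! k)) (restr y' (vs ! k)))"
      using sv unfolding n_def by (metis in_set_conv_nth)
    also have "\<dots> \<longleftrightarrow> prod_le (\<lambda>k. le_Pi P cmp (vs ! k)) [0..<n] (G y) (G y')"
      unfolding prod_le_def G_def by simp
    finally show ?thesis .
  qed
  have bij: "bij_betw G Y (prod_carrier C [0..<n])"
    unfolding bij_betw_def
  proof
    show "inj_on G Y"
    proof (rule inj_onI)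
      fix y y' assume y: "y \<in> Y" and y': "y' \<in> Y" and eq: "G y = G y'"
      have refl: "prod_le (\<lambda>k. le_Pi P cmp (vs ! k)) [0..<n] (G y) (G y)"
        unfolding prod_le_def G_def using le_refl[OF rPk[OF y] fvk] by simp
      have "le_Pi P cmp I y y'" using ord[OF y y'] refl eq by simp
      moreover have "le_Pi P cmp I y' y" using ord[OF y' y] refl eq by simp
      ultimately show "y = y'" using le_antisym fI by blast
    qed
    show "G ` Y = prod_carrier C [0..<n]"
    proof
      show "G ` Y \<subseteq> prod_carrier C [0..<n]" using GC by blast
      show "prod_carrier C [0..<n] \<subseteq> G ` Y"
      proof
        fix ts assume ts: "ts \<in> prod_carrier C [0..<n]"
        have lts: "length ts = n" using ts PC by simp
        have tsC: "ts ! k \<in> C k" if "k < n" for k using ts PC that by simp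
        have tP: "ts ! k \<in> PiP P (vs ! k)" if "k < n" for k using tsC[OF that] unfolding C_def Iv_def by simp
        have tle: "le_Pi P cmp (vs ! k) (ts ! k) (one_block (vs ! k) (the (th (vs ! k))))" if "k < n" for k
          using tsC[OF that] unfolding C_def Iv_def by simp
        have tsub: "u \<subseteq> vs ! k" if "k < n" "u \<in> dom (ts ! k)" for k u
          using part_sub[OF PiP_D[OF tP[OF that(1)]] that(2)] .
        have tne: "u \<noteq> {}" if "k < n" "u \<in> dom (ts ! k)" for k u
          using part_ne[OF PiP_D[OF tP[OF that(1)]] that(2)] .
        have kuniq: "k = k'" if "k < n" "k' < n" "u \<in> dom (ts ! k)" "u \<in> dom (ts ! k')" for k k' u
        proof -
          have "u \<subseteq> vs ! k" "u \<subseteq> vs ! k'" "u \<noteq> {}" using tsub tne that by blast+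
          then show ?thesis using kinj[OF that(1,2)] by blast
        qed
        define y where "y u = (if \<exists>k<n. u \<in> dom (ts ! k) then (ts ! (SOME k. k < n \<and> u \<in> dom (ts ! k))) u else None)" for u
        have yk: "y u = (ts ! k) u" if "k < n" "u \<in> dom (ts ! k)" for k u
        proof -
          have "(SOME k. k < n \<and> u \<in> dom (ts ! k)) = k"
            using that kuniq by (intro some_equality) auto
          then show ?thesis unfolding y_def using that by auto
        qed
        have ynone: "y u = None" if "\<forall>k<n. u \<notin> dom (ts ! k)" for u unfolding y_def using that by auto
        have domy: "dom y = (\<Union>k\<in>{..<n}. dom (ts ! k))"
        proof
          show "dom y \<subseteq> (\<Union>k\<in>{..<n}. dom (ts ! k))"
          proof
            fix u assume u: "u \<in> dom y"
            show "u \<in> (\<Union>k\<in>{..<n}. dom (ts ! k))"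
            proof (rule ccontr)
              assume "u \<notin> (\<Union>k\<in>{..<n}. dom (ts ! k))"
              then have "\<forall>k<n. u \<notin> dom (ts ! k)" by blast
              then have "y u = None" by (rule ynone)
              then show False using u by (simp add: domIff)
            qed
          qed
          show "(\<Union>k\<in>{..<n}. dom (ts ! k)) \<subseteq> dom y" using yk by (auto simp: domIff)
        qed
        have restrk: "restr y (vs ! k) = ts ! k" if k: "k < n" for k
        proof
          fix u
          show "restr y (vs ! k) u = (ts ! k) u"
          proof (cases "u \<in> dom (ts ! k)")
            case True
            then show ?thesis unfolding restr_def using yk[OF k True] tsub[OF k True] by simp
          next
            case False
            have "y u = None" if "u \<subseteq> vs ! k"
            proof (rule ynone, intro allI impI)
              fix k' assume k': "k' < n"
              show "u \<notin> dom (ts ! k')"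
              proof
                assume u: "u \<in> dom (ts ! k')"
                have "u \<subseteq> vs ! k'" "u \<noteq> {}" using tsub[OF k' u] tne[OF k' u] by auto
                then have "k = k'" using kinj[OF k k'] \<open>u \<subseteq> vs ! k\<close> by blast
                then show False using u False by simp
              qed
            qed
            then show ?thesis unfolding restr_def using False by (auto simp: domIff)
          qed
        qed
        have yP: "y \<in> PiP P I"
          unfolding PiP_def
        proof (intro CollectI conjI ballI)
          show "partition_on I (dom y)"
          proof (rule part_I)
            have "\<Union>(dom y) = (\<Union>k\<in>{..<n}. \<Union>(dom (ts ! k)))" using domy by blast
            also have "\<dots> = (\<Union>k\<in>{..<n}. vs ! k)" using partition_onD1[OF PiP_D[OF tP]] by simp
            also have "\<dots> = \<Union>(set vs)" unfolding n_def by (metis image_set lessThan_atLeast0 map_nth set_map set_upt)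
            also have "\<dots> = I" using sv partition_onD1[OF PiP_D[OF th]] by simp
            finally show "\<Union>(dom y) = I" .
          next
            fix u u' assume u: "u \<in> dom y" and u': "u' \<in> dom y" and ne: "u \<inter> u' \<noteq> {}"
            obtain k where k: "k < n" "u \<in> dom (ts ! k)" using u domy by blast
            obtain k' where k': "k' < n" "u' \<in> dom (ts ! k')" using u' domy by blast
            have "k = k'" using kinj[OF k(1) k'(1)] tsub[OF k] tsub[OF k'] ne by blast
            then show "u = u'" using part_uniq[OF PiP_D[OF tP[OF k(1)]] k(2)] k' ne by blast
          next
            show "{} \<notin> dom y" using domy tne by blast
          qed
          fix u assume "u \<in> dom y"
          then obtain k where k: "k < n" "u \<in> dom (ts ! k)" using domy by blast
          then show "the (y u) \<in> P u" using yk[OF k] PiP_val[OF tP[OF k(1)]] by simp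
        qed
        have yth: "le_Pi P cmp I y th"
          unfolding le_char[OF fI]
        proof (intro conjI ballI yP th)
          fix v assume "v \<in> dom th"
          then obtain k where k: "k < n" "v = vs ! k" using sv unfolding n_def by (metis in_set_conv_nth)
          have H: "\<Union>(blocks_in (ts ! k) (vs ! k)) = vs ! k" "gen (ts ! k) (vs ! k) (the (th (vs ! k)))"
            using tle[OF k(1)] le_one_block_iff[OF fvk[OF k(1)] thk[OF k(1)]] by auto
          have "blocks_in y (vs ! k) = dom (ts ! k)" using restr_dom[of y "vs ! k"] restrk[OF k(1)] by simp
          then show "\<Union>(blocks_in y v) = v" using partition_onD1[OF PiP_D[OF tP[OF k(1)]]] k(2) by simp
          have "gen (restr y (vs ! k)) (vs ! k) (the (th (vs ! k)))" using restrk[OF k(1)] H(2) by simp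
          then show "gen y v (the (th v))" using restr_gen[OF yP fI order_refl] k(2) by simp
        qed
        have "y \<in> Y" unfolding Y_def using yP yth zero_le[OF yP fI] by simp
        moreover have "G y = ts"
        proof (rule nth_equalityI)
          show "length (G y) = length ts" unfolding G_def using lts by simp
          fix k assume "k < length (G y)"
          then have k: "k < n" unfolding G_def by simp
          show "G y ! k = ts ! k" unfolding G_def using k restrk[OF k] by simp
        qed
        ultimately show "ts \<in> G ` Y" by blast
      qed
    qed
  qed
  have "poset_iso Y (le_Pi P cmp I) (prod_carrier C [0..<n]) (prod_le (\<lambda>k. le_Pi P cmp (vs ! k)) [0..<n])"
    unfolding poset_iso_def using bij ord by blast
  then show ?thesis unfolding Y_def C_def n_def .
qed

end


lemma iso_single:
  "poset_iso (C b) (l b) (prod_carrier C [b]) (prod_le l [b])"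
proof -
  define f where "f t = [t]" for t :: 'a
  have "bij_betw f (C b) (prod_carrier C [b])"
    unfolding bij_betw_def
  proof
    show "inj_on f (C b)" unfolding f_def by (rule inj_onI) simp
    show "f ` C b = prod_carrier C [b]"
    proof
      show "f ` C b \<subseteq> prod_carrier C [b]" unfolding f_def prod_carrier_def by auto
      show "prod_carrier C [b] \<subseteq> f ` C b"
      proof
        fix ts assume "ts \<in> prod_carrier C [b]"
        then have "length ts = 1" "ts ! 0 \<in> C b" unfolding prod_carrier_def by auto
        then have "ts = f (ts ! 0)" unfolding f_def by (cases ts) auto
        then show "ts \<in> f ` C b" using \<open>ts ! 0 \<in> C b\<close> by blast
      qed
    qed
  qed
  moreover have "\<forall>a\<in>C b. \<forall>a'\<in>C b. l b a a' \<longleftrightarrow> prod_le l [b] (f a) (f a')"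
    unfolding prod_le_def f_def by simp
  ultimately show ?thesis unfolding poset_iso_def by blast
qed

context OP begin

lemma factor:
  fixes r :: "nat \<times> 'b set \<Rightarrow> 'b"
  assumes r: "\<forall>(n, \<alpha>) \<in> coinvariants P ren. r (n, \<alpha>) \<in> \<alpha>"
    and fL: "finite L" and p: "p \<in> P L"
  shows "\<exists>\<beta>\<in>coinvariants P ren. poset_iso (Iv L p) (le_Pi P cmp L)
     ((\<lambda>(n, \<alpha>). {y \<in> PiP P {1..n}. le_Pi P cmp {1..n} (pi_zero e {1..n}) y
                                    \<and> le_Pi P cmp {1..n} y (one_block {1..n} (r (n, \<alpha>)))}) \<beta>)
     ((\<lambda>(n, \<alpha>). le_Pi P cmp {1..n}) \<beta>)"
proof -
  define c where "c = card L"
  have Lne: "L \<noteq> {}" using P_nonempty_idx[OF p] .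
  have c1: "c \<ge> 1" unfolding c_def using fL Lne by (simp add: Suc_le_eq card_gt_0_iff)
  obtain h where h: "bij_betw h {1..c} L" unfolding c_def using ex_bij_betw_nat_finite_1[OF fL] by (elim exE)
  define s0 where "s0 = inv_into {1..c} h"
  have s0: "bij_betw s0 L {1..c}" unfolding s0_def using bij_betw_inv_into[OF h] .
  define x0 where "x0 = ren L s0 p"
  have x0: "x0 \<in> P {1..c}" unfolding x0_def using ren_in[OF fL s0 p] .
  define \<alpha> where "\<alpha> = {ren {1..c} s x0 | s. bij_betw s {1..c} {1..c}}"
  have \<beta>: "(c, \<alpha>) \<in> coinvariants P ren" unfolding coinvariants_def \<alpha>_def using c1 x0 by blast
  then have "r (c, \<alpha>) \<in> \<alpha>" using r by blast
  then obtain t where t: "bij_betw t {1..c} {1..c}" and rt: "r (c, \<alpha>) = ren {1..c} t x0"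
    unfolding \<alpha>_def by blast
  have ts0: "bij_betw (t \<circ> s0) L {1..c}" using bij_betw_trans[OF s0 t] .
  have "ren L (t \<circ> s0) p = r (c, \<alpha>)" using ren_comp[OF fL s0 t p] rt unfolding x0_def by simp
  then have "poset_iso (Iv L p) (le_Pi P cmp L) (Iv {1..c} (r (c, \<alpha>))) (le_Pi P cmp {1..c})"
    using relabel_iso[OF ts0 fL p] by simp
  then show ?thesis unfolding Iv_def by (intro bexI[OF _ \<beta>]) simp
qed

end

theorem proposition3p4:
  fixes P :: "nat set \<Rightarrow> 'b set"
    and ren :: "nat set \<Rightarrow> (nat \<Rightarrow> nat) \<Rightarrow> 'b \<Rightarrow> 'b"
    and e :: "nat \<Rightarrow> 'b"
    and cmp :: "nat set \<Rightarrow> 'b \<Rightarrow> (nat \<Rightarrow> nat set) \<Rightarrow> (nat \<Rightarrow> 'b) \<Rightarrow> 'b"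
    and r :: "nat \<times> 'b set \<Rightarrow> 'b"
  assumes "set_operad P ren e cmp"
    and "augmented P e"
    and "basic P cmp"
    and "\<forall>(n, \<alpha>) \<in> coinvariants P ren. r (n, \<alpha>) \<in> \<alpha>"
  shows "good_collection (coinvariants P ren)
           (\<lambda>(n, \<alpha>). {y \<in> PiP P {1..n}. le_Pi P cmp {1..n} (pi_zero e {1..n}) y
                                    \<and> le_Pi P cmp {1..n} y (one_block {1..n} (r (n, \<alpha>)))})
           (\<lambda>(n, \<alpha>). le_Pi P cmp {1..n})"
proof -
  interpret OP P ren e cmp using assms(1-3) by unfold_locales
  have r: "\<forall>(n, \<alpha>) \<in> coinvariants P ren. r (n, \<alpha>) \<in> \<alpha>" by fact
  define A where "A = coinvariants P ren"
  define C where "C = (\<lambda>(n, \<alpha>). {y \<in> PiP P {1..n}. le_Pi P cmp {1..n} (pi_zero e {1..n}) y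
                                    \<and> le_Pi P cmp {1..n} y (one_block {1..n} (r (n, \<alpha>)))})"
  define le where "le = (\<lambda>(n::nat, \<alpha>::'b set). le_Pi P cmp {1..n})"
  have Cv: "C (n, \<alpha>) = Iv {1..n} (r (n, \<alpha>))" for n \<alpha> unfolding C_def Iv_def by simp
  have lev: "le (n, \<alpha>) = le_Pi P cmp {1..n}" for n \<alpha> unfolding le_def by simp
  have fac: "\<exists>\<beta>\<in>A. poset_iso (Iv L p) (le_Pi P cmp L) (C \<beta>) (le \<beta>)" if "finite L" "p \<in> P L" for L p
    using factor[OF r that] unfolding A_def C_def le_def .
  have rP: "r (n, \<alpha>) \<in> P {1..n}" if Hn: "(n, \<alpha>) \<in> A" for n \<alpha>
  proof -
    have "r (n, \<alpha>) \<in> \<alpha>" using r Hn unfolding A_def by blast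
    moreover obtain x where "x \<in> P {1..n}" "\<alpha> = {ren {1..n} s x | s. bij_betw s {1..n} {1..n}}"
      using Hn unfolding A_def coinvariants_def by blast
    ultimately show ?thesis using ren_in by auto
  qed
  show ?thesis
    unfolding good_collection_def A_def[symmetric] C_def[symmetric] le_def[symmetric]
  proof (intro conjI ballI)
    fix \<beta> assume "\<beta> \<in> A"
    then obtain n \<alpha> where b: "\<beta> = (n, \<alpha>)" "(n, \<alpha>) \<in> A" by (cases \<beta>) auto
    define I where "I = {1..n::nat}"
    have fI: "finite I" unfolding I_def by simp
    have CI: "C \<beta> = {y \<in> PiP P I. le_Pi P cmp I (pi_zero e I) y \<and> le_Pi P cmp I y (one_block I (r \<beta>))}"
      using Cv b unfolding Iv_def I_def by simp
    have leI: "le \<beta> = le_Pi P cmp I" using lev b unfolding I_def by simp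
    show "is_poset (C \<beta>) (le \<beta>)"
      unfolding is_poset_def CI leI
      using le_refl[OF _ fI] le_trans[OF _ _ fI] le_antisym[OF _ _ fI] by blast
  next
    fix \<beta> assume "\<beta> \<in> A"
    then obtain n \<alpha> where b: "\<beta> = (n, \<alpha>)" "(n, \<alpha>) \<in> A" by (cases \<beta>) auto
    define I where "I = {1..n::nat}"
    have fI: "finite I" unfolding I_def by simp
    define p where "p = r \<beta>"
    have p: "p \<in> P I" using rP[OF b(2)] b unfolding p_def I_def by simp
    have CI: "C \<beta> = {y \<in> PiP P I. le_Pi P cmp I (pi_zero e I) y \<and> le_Pi P cmp I y (one_block I p)}"
      using Cv b unfolding Iv_def I_def p_def by simp
    have leI: "le \<beta> = le_Pi P cmp I" using lev b unfolding I_def by simp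
    define bot where "bot = pi_zero e I"
    define top where "top = one_block I p"
    have botP: "bot \<in> PiP P I" unfolding bot_def using zero_PiP[OF fI] .
    have topP: "top \<in> PiP P I" unfolding top_def using one_block_PiP[OF p] .
    have bt: "le_Pi P cmp I bot top" unfolding bot_def using zero_le[OF topP fI] .
    have bC: "bot \<in> C \<beta>" unfolding CI using botP bt le_refl[OF botP fI] bot_def top_def by simp
    have tC: "top \<in> C \<beta>" unfolding CI using topP bt le_refl[OF topP fI] bot_def top_def by simp
    have allC: "\<forall>y\<in>C \<beta>. le \<beta> bot y \<and> le \<beta> y top" unfolding CI leI bot_def top_def by auto
    have "\<forall>x\<in>C \<beta>. iso_finite_product A C le {y \<in> C \<beta>. le \<beta> bot y \<and> le \<beta> y x} (le \<beta>) \<and>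
                   iso_finite_product A C le {y \<in> C \<beta>. le \<beta> x y \<and> le \<beta> y top} (le \<beta>)"
    proof (intro ballI conjI)
      fix x assume x: "x \<in> C \<beta>"
      have xP: "x \<in> PiP P I" and bx: "le_Pi P cmp I bot x" and xt: "le_Pi P cmp I x top"
        using x unfolding CI bot_def top_def by auto
      have low: "{y \<in> C \<beta>. le \<beta> bot y \<and> le \<beta> y x} = {y \<in> PiP P I. le_Pi P cmp I (pi_zero e I) y \<and> le_Pi P cmp I y x}"
        unfolding CI leI bot_def top_def using le_trans[OF _ xt fI] top_def by auto
      have up: "{y \<in> C \<beta>. le \<beta> x y \<and> le \<beta> y top} = {y \<in> PiP P I. le_Pi P cmp I x y \<and> le_Pi P cmp I y (one_block I p)}"
        unfolding CI leI bot_def top_def using le_trans[OF bx _ fI] bot_def by auto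
      show "iso_finite_product A C le {y \<in> C \<beta>. le \<beta> bot y \<and> le \<beta> y x} (le \<beta>)"
      proof -
        have fx: "finite (dom x)" using part_finite[OF PiP_D[OF xP] fI] .
        obtain vs where vs: "set vs = dom x" "distinct vs" using finite_distinct_list[OF fx] by blast
        define m where "m = length vs"
        have vk: "vs ! k \<in> dom x" if "k < m" for k using that vs(1) unfolding m_def by (metis nth_mem)
        have fvk: "finite (vs ! k)" if "k < m" for k
          using part_finite_blocks[OF PiP_D[OF xP] fI vk[OF that]] .
        have "\<forall>k. \<exists>\<beta>'. k < m \<longrightarrow> \<beta>' \<in> A \<and>
            poset_iso (Iv (vs ! k) (the (x (vs ! k)))) (le_Pi P cmp (vs ! k)) (C \<beta>') (le \<beta>')"
          using fac[OF fvk PiP_val[OF xP vk]] by blast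
        then obtain bf where bf: "\<And>k. k < m \<Longrightarrow> bf k \<in> A"
          and bfi: "\<And>k. k < m \<Longrightarrow> poset_iso (Iv (vs ! k) (the (x (vs ! k)))) (le_Pi P cmp (vs ! k)) (C (bf k)) (le (bf k))"
          by metis
        define iss where "iss = map bf [0..<m]"
        have "poset_iso (prod_carrier (\<lambda>k. Iv (vs ! k) (the (x (vs ! k)))) [0..<m])
                (prod_le (\<lambda>k. le_Pi P cmp (vs ! k)) [0..<m]) (prod_carrier C iss) (prod_le le iss)"
          by (rule iso_prod) (use bfi in \<open>simp_all add: iss_def\<close>)
        then have "poset_iso {y \<in> C \<beta>. le \<beta> bot y \<and> le \<beta> y x} (le \<beta>) (prod_carrier C iss) (prod_le le iss)"
          using iso_trans[OF lower_iso[OF xP fI vs(2) vs(1)]] low leI unfolding m_def by simp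
        moreover have "set iss \<subseteq> A" unfolding iss_def using bf by auto
        ultimately show ?thesis unfolding iso_finite_product_def by blast
      qed
      show "iso_finite_product A C le {y \<in> C \<beta>. le \<beta> x y \<and> le \<beta> y top} (le \<beta>)"
      proof -
        obtain k q where q: "q \<in> P {1..k}" and iso1: "poset_iso {y \<in> PiP P I. le_Pi P cmp I x y \<and> le_Pi P cmp I y (one_block I p)} (le_Pi P cmp I)
               (Iv {1..k} q) (le_Pi P cmp {1..k})"
          using upper_iso[OF xP fI p] xt top_def by blast
        obtain \<beta>' where b': "\<beta>' \<in> A" and iso2: "poset_iso (Iv {1..k} q) (le_Pi P cmp {1..k}) (C \<beta>') (le \<beta>')"
          using fac[OF _ q] by auto
        have "poset_iso {y \<in> C \<beta>. le \<beta> x y \<and> le \<beta> y top} (le \<beta>) (prod_carrier C [\<beta>']) (prod_le le [\<beta>'])"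
          using iso_trans[OF iso_trans[OF iso1 iso2] iso_single[of C \<beta>' le]] up leI by simp
        then show ?thesis unfolding iso_finite_product_def using b' by (intro exI[of _ "[\<beta>']"]) simp
      qed
    qed
    then show "\<exists>bot\<in>C \<beta>. \<exists>top\<in>C \<beta>. (\<forall>y\<in>C \<beta>. le \<beta> bot y \<and> le \<beta> y top) \<and>
        (\<forall>x\<in>C \<beta>. iso_finite_product A C le {y \<in> C \<beta>. le \<beta> bot y \<and> le \<beta> y x} (le \<beta>) \<and>
                   iso_finite_product A C le {y \<in> C \<beta>. le \<beta> x y \<and> le \<beta> y top} (le \<beta>))"
      using bC tC allC by blast
  qed
qed


end
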